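(* In the setting below, let $\varepsilon:U(N)\to k$ be the augmentation map. Then: (1) there is a $k$-algebra homomorphism $\Phi_w:U(N)((t_w;\delta_w))\to k((t_z))$, $\sum_i t_w^if_i\mapsto\sum_i t_z^i\varepsilon(f_i)$ ($f_i\in U(N)$); (2) there is a $k$-algebra homomorphism $\Phi_v:U(N)((t_w;\delta_w))((t_v;\delta_v))\to k((t_z))((t_y))$, $\sum_i t_v^ig_i\mapsto\sum_i t_y^i\Phi_w(g_i)$; (3) there is a $k$-algebra homomorphism $\Phi_u:U(N)((t_w;\delta_w))((t_v;\delta_v))((t_u;\delta_u))\to k((t_z))((t_y))((t_x;\delta_x))$, $\sum_it_u^ih_i\mapsto\sum_it_x^i\Phi_v(h_i)$.
   Context: Let $k$ be a field, $H=\langle x,y\mid[[y,x],x]=[[y,x],y]=0\rangle$ the Heisenberg Lie $k$-algebra, $z=[y,x]$; $L$ a Lie $k$-algebra generated by $u,v$ with a Lie homomorphism $\rho:L\to H$, $u\mapsto x$, $v\mapsto y$; $N=\ker\rho$, $w=[v,u]$. For an element $s$ of an algebra, $\delta_s(f)=fs-sf$. For a $k$-algebra $R$ with derivation $\delta$, $R((t;\delta))$ is the ring of Laurent series $\sum_{i\ge n}t^ia_i$ ($a_i\in R$) with $at^{-1}=t^{-1}a+\delta(a)$, i.e. $at=\sum_{i\ge1}t^i(-1)^{i-1}\delta^{i-1}(a)$; when $\delta=0$ we write $R((t))$. Here $\delta_w$ is the restriction to $U(N)$ of the inner derivation by $w$ in $U(L)$; $\delta_v$ is extended from $U(N)[w;\delta_w]$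 to $U(N)((t_w;\delta_w))$ by $\delta_v(t_w)=-t_w\delta_v(w)t_w$ and termwise on series; $\delta_u$ is extended similarly to $U(N)((t_w;\delta_w))((t_v;\delta_v))$ with $\delta_u(t_w)=-t_w\delta_u(w)t_w$, $\delta_u(t_v)=-t_v w t_v$. On the other side $\delta_x$ is the derivation of $k((t_z))((t_y))$ with $\delta_x(k)=0$, $\delta_x(t_z)=0$, $\delta_x(t_y)=-t_yzt_y$ (with $z=t_z^{-1}$), acting termwise on series. The augmentation $\varepsilon$ is the $k$-algebra homomorphism $U(N)\to k$ with $\varepsilon(N)=0$. *)

theory Defs
  imports "HOL.Vector_Spaces" "HOL-Algebra.Ring" "HOL-Library.Product_Plus"
begin

definition lie_algebra :: "('k::field \<Rightarrow> 'l::ab_group_add \<Rightarrow> 'l) \<Rightarrow> ('l \<Rightarrow> 'l \<Rightarrow> 'l) \<Rightarrow> bool" where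
  "lie_algebra sm br \<longleftrightarrow> Vector_Spaces.vector_space sm
     \<and> (\<forall>a b c. br (a + b) c = br a c + br b c)
     \<and> (\<forall>a b c. br a (b + c) = br a b + br a c)
     \<and> (\<forall>r a b. br (sm r a) b = sm r (br a b))
     \<and> (\<forall>r a b. br a (sm r b) = sm r (br a b))
     \<and> (\<forall>a. br a a = 0)
     \<and> (\<forall>a b c. br a (br b c) + br b (br c a) + br c (br a b) = 0)"

inductive_set lie_gen :: "('k::field \<Rightarrow> 'l::ab_group_add \<Rightarrow> 'l) \<Rightarrow> ('l \<Rightarrow> 'l \<Rightarrow> 'l) \<Rightarrow> 'l set \<Rightarrow> 'l set"
  for sm br S where
  base: "a \<in> S \<Longrightarrow> a \<in> lie_gen sm br S"
| add: "a \<in> lie_gen sm br S \<Longrightarrow> b \<in> lie_gen sm br S \<Longrightarrow> a + b \<in> lie_gen sm br S"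
| scal: "a \<in> lie_gen sm br S \<Longrightarrow> sm r a \<in> lie_gen sm br S"
| brk: "a \<in> lie_gen sm br S \<Longrightarrow> b \<in> lie_gen sm br S \<Longrightarrow> br a b \<in> lie_gen sm br S"

definition lie_hom :: "('k::field \<Rightarrow> 'l::ab_group_add \<Rightarrow> 'l) \<Rightarrow> ('l \<Rightarrow> 'l \<Rightarrow> 'l)
   \<Rightarrow> ('k \<Rightarrow> 'm::ab_group_add \<Rightarrow> 'm) \<Rightarrow> ('m \<Rightarrow> 'm \<Rightarrow> 'm) \<Rightarrow> ('l \<Rightarrow> 'm) \<Rightarrow> bool" where
  "lie_hom sm br sm' br' f \<longleftrightarrow>
     (\<forall>a b. f (a + b) = f a + f b) \<and> (\<forall>r a. f (sm r a) = sm' r (f a))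
     \<and> (\<forall>a b. f (br a b) = br' (f a) (f b))"

section \<open>The Heisenberg Lie algebra H, realised on k^3 with basis x, y, z = [y,x]\<close>

definition heis_sm :: "'k::field \<Rightarrow> 'k \<times> 'k \<times> 'k \<Rightarrow> 'k \<times> 'k \<times> 'k" where
  "heis_sm c p = (c * fst p, c * fst (snd p), c * snd (snd p))"

definition heis_br :: "'k::field \<times> 'k \<times> 'k \<Rightarrow> 'k \<times> 'k \<times> 'k \<Rightarrow> 'k \<times> 'k \<times> 'k" where
  "heis_br p q = (0, 0, fst (snd p) * fst q - fst p * fst (snd q))"

definition hx :: "'k::field \<times> 'k \<times> 'k" where "hx = (1, 0, 0)"
definition hy :: "'k::field \<times> 'k \<times> 'k" where "hy = (0, 1, 0)"
definition hz :: "'k::field \<times> 'k \<times> 'k" where "hz = (0, 0, 1)"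

section \<open>Universal enveloping algebra U(L) = free algebra on L modulo the usual relations\<close>

definition fa_carrier :: "('l list \<Rightarrow> 'k::field) set" where
  "fa_carrier = {f. finite {w. f w \<noteq> 0}}"

definition fadd :: "('l list \<Rightarrow> 'k::field) \<Rightarrow> ('l list \<Rightarrow> 'k) \<Rightarrow> ('l list \<Rightarrow> 'k)" where
  "fadd f g = (\<lambda>w. f w + g w)"

definition fsc :: "'k::field \<Rightarrow> ('l list \<Rightarrow> 'k) \<Rightarrow> ('l list \<Rightarrow> 'k)" where
  "fsc c f = (\<lambda>w. c * f w)"

definition fmul :: "('l list \<Rightarrow> 'k::field) \<Rightarrow> ('l list \<Rightarrow> 'k) \<Rightarrow> ('l list \<Rightarrow> 'k)" where
  "fmul f g = (\<lambda>w. \<Sum>i\<in>{0..length w}. f (take i w) * g (drop i w))"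

definition fzero :: "'l list \<Rightarrow> 'k::field" where "fzero = (\<lambda>w. 0)"
definition fone :: "'l list \<Rightarrow> 'k::field" where "fone = (\<lambda>w. if w = [] then 1 else 0)"
definition fgen :: "'l \<Rightarrow> 'l list \<Rightarrow> 'k::field" where "fgen a = (\<lambda>w. if w = [a] then 1 else 0)"

definition fa_rels :: "('k::field \<Rightarrow> 'l::ab_group_add \<Rightarrow> 'l) \<Rightarrow> ('l \<Rightarrow> 'l \<Rightarrow> 'l) \<Rightarrow> ('l list \<Rightarrow> 'k) set" where
  "fa_rels sm br =
     {fadd (fgen (a + b)) (fsc (-1) (fadd (fgen a) (fgen b))) | a b. True}
   \<union> {fadd (fgen (sm c a)) (fsc (- c) (fgen a)) | c a. True}
   \<union> {fadd (fmul (fgen a) (fgen b)) (fsc (-1) (fadd (fmul (fgen b) (fgen a)) (fgen (br a b)))) | a b. True}"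

definition fa_ideal :: "('k::field \<Rightarrow> 'l::ab_group_add \<Rightarrow> 'l) \<Rightarrow> ('l \<Rightarrow> 'l \<Rightarrow> 'l) \<Rightarrow> ('l list \<Rightarrow> 'k) set" where
  "fa_ideal sm br = \<Inter>{J. J \<subseteq> fa_carrier \<and> fa_rels sm br \<subseteq> J \<and> fzero \<in> J
      \<and> (\<forall>f\<in>J. \<forall>g\<in>J. fadd f g \<in> J)
      \<and> (\<forall>f\<in>J. \<forall>g\<in>fa_carrier. fmul f g \<in> J \<and> fmul g f \<in> J)}"

definition ul_cls :: "('k::field \<Rightarrow> 'l::ab_group_add \<Rightarrow> 'l) \<Rightarrow> ('l \<Rightarrow> 'l \<Rightarrow> 'l) \<Rightarrow> ('l list \<Rightarrow> 'k) \<Rightarrow> ('l list \<Rightarrow> 'k) set" where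
  "ul_cls sm br f = {g \<in> fa_carrier. fadd g (fsc (-1) f) \<in> fa_ideal sm br}"

definition ul_rep :: "('l list \<Rightarrow> 'k::field) set \<Rightarrow> ('l list \<Rightarrow> 'k)" where
  "ul_rep X = (SOME f. f \<in> X)"

definition UL_ring :: "('k::field \<Rightarrow> 'l::ab_group_add \<Rightarrow> 'l) \<Rightarrow> ('l \<Rightarrow> 'l \<Rightarrow> 'l) \<Rightarrow> ('l list \<Rightarrow> 'k) set ring" where
  "UL_ring sm br =
    \<lparr>carrier = {ul_cls sm br f | f. f \<in> fa_carrier},
     mult = (\<lambda>X Y. ul_cls sm br (fmul (ul_rep X) (ul_rep Y))),
     one = ul_cls sm br fone,
     zero = ul_cls sm br fzero,
     add = (\<lambda>X Y. ul_cls sm br (fadd (ul_rep X) (ul_rep Y)))\<rparr>"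

definition ul_sc :: "('k::field \<Rightarrow> 'l::ab_group_add \<Rightarrow> 'l) \<Rightarrow> ('l \<Rightarrow> 'l \<Rightarrow> 'l) \<Rightarrow> 'k \<Rightarrow> ('l list \<Rightarrow> 'k) set \<Rightarrow> ('l list \<Rightarrow> 'k) set" where
  "ul_sc sm br c X = ul_cls sm br (fsc c (ul_rep X))"

definition ul_gen :: "('k::field \<Rightarrow> 'l::ab_group_add \<Rightarrow> 'l) \<Rightarrow> ('l \<Rightarrow> 'l \<Rightarrow> 'l) \<Rightarrow> 'l \<Rightarrow> ('l list \<Rightarrow> 'k) set" where
  "ul_gen sm br a = ul_cls sm br (fgen a)"

text \<open>U(N) for N \<subseteq> L, viewed (via PBW) as the subalgebra of U(L) generated by N\<close>
inductive_set un_set :: "('k::field \<Rightarrow> 'l::ab_group_add \<Rightarrow> 'l) \<Rightarrow> ('l \<Rightarrow> 'l \<Rightarrow> 'l) \<Rightarrow> 'l set \<Rightarrow> ('l list \<Rightarrow> 'k) set set"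
  for sm br N where
  scal: "ul_sc sm br c (one (UL_ring sm br)) \<in> un_set sm br N"
| gen: "n \<in> N \<Longrightarrow> ul_gen sm br n \<in> un_set sm br N"
| add: "X \<in> un_set sm br N \<Longrightarrow> Y \<in> un_set sm br N \<Longrightarrow> add (UL_ring sm br) X Y \<in> un_set sm br N"
| mult: "X \<in> un_set sm br N \<Longrightarrow> Y \<in> un_set sm br N \<Longrightarrow> mult (UL_ring sm br) X Y \<in> un_set sm br N"

definition UN_ring :: "('k::field \<Rightarrow> 'l::ab_group_add \<Rightarrow> 'l) \<Rightarrow> ('l \<Rightarrow> 'l \<Rightarrow> 'l) \<Rightarrow> 'l set \<Rightarrow> ('l list \<Rightarrow> 'k) set ring" where
  "UN_ring sm br N = (UL_ring sm br)\<lparr>carrier := un_set sm br N\<rparr>"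

definition ul_der :: "('k::field \<Rightarrow> 'l::ab_group_add \<Rightarrow> 'l) \<Rightarrow> ('l \<Rightarrow> 'l \<Rightarrow> 'l) \<Rightarrow> 'l \<Rightarrow> ('l list \<Rightarrow> 'k) set \<Rightarrow> ('l list \<Rightarrow> 'k) set" where
  "ul_der sm br s X = a_minus (UL_ring sm br) (mult (UL_ring sm br) X (ul_gen sm br s)) (mult (UL_ring sm br) (ul_gen sm br s) X)"

definition K_ring :: "'k::field ring" where
  "K_ring = \<lparr>carrier = UNIV, mult = (*), one = 1, zero = 0, add = (+)\<rparr>"

section \<open>Skew Laurent series R((t;d)): series \<Sum>_{i\<ge>n} t^i a_i represented by i \<mapsto> a_i\<close>

definition ls_carrier :: "('a, 'm) ring_scheme \<Rightarrow> (int \<Rightarrow> 'a) set" where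
  "ls_carrier R = {f. (\<forall>i. f i \<in> carrier R) \<and> (\<exists>n. \<forall>i<n. f i = zero R)}"

text \<open>Multiplication, using a t^j = \<Sum>_{k\<ge>0} (-j choose k) t^(j+k) d^k(a), which follows from
  a t^-1 = t^-1 a + d(a); for j=1 this is a t = \<Sum>_{k\<ge>0} t^(1+k) (-1)^k d^k(a).\<close>
definition int_binom :: "int \<Rightarrow> nat \<Rightarrow> int" where
  "int_binom m k = (if 0 \<le> m then int (nat m choose k) else (-1) ^ k * int ((nat (- m) + k - 1) choose k))"

definition ls_mult :: "('a, 'm) ring_scheme \<Rightarrow> ('a \<Rightarrow> 'a) \<Rightarrow> (int \<Rightarrow> 'a) \<Rightarrow> (int \<Rightarrow> 'a) \<Rightarrow> (int \<Rightarrow> 'a)" where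
  "ls_mult R d f g = (\<lambda>n. finsum R
      (\<lambda>(j :: int, k :: nat). add_pow R (int_binom (- j) k) (mult R ((d ^^ k) (f (n - j - int k))) (g j)))
      {(j :: int, k :: nat). f (n - j - int k) \<noteq> zero R \<and> g j \<noteq> zero R})"

definition ls_one :: "('a, 'm) ring_scheme \<Rightarrow> int \<Rightarrow> 'a" where
  "ls_one R = (\<lambda>i. if i = 0 then one R else zero R)"

definition LS :: "('a, 'm) ring_scheme \<Rightarrow> ('a \<Rightarrow> 'a) \<Rightarrow> (int \<Rightarrow> 'a) ring" where
  "LS R d = \<lparr>carrier = ls_carrier R, mult = ls_mult R d, one = ls_one R,
             zero = (\<lambda>i. zero R), add = (\<lambda>f g i. add R (f i) (g i))\<rparr>"

definition ls_t :: "('a, 'm) ring_scheme \<Rightarrow> int \<Rightarrow> int \<Rightarrow> 'a" where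
  "ls_t R i = (\<lambda>j. if j = i then one R else zero R)"

definition ls_const :: "('a, 'm) ring_scheme \<Rightarrow> 'a \<Rightarrow> int \<Rightarrow> 'a" where
  "ls_const R a = (\<lambda>j. if j = 0 then a else zero R)"

definition ls_sum :: "('a, 'm) ring_scheme \<Rightarrow> (int \<Rightarrow> int \<Rightarrow> 'a) \<Rightarrow> int \<Rightarrow> 'a" where
  "ls_sum R F = (\<lambda>n. finsum R (\<lambda>i. F i n) {i. F i n \<noteq> zero R})"

text \<open>Given a derivation D of R and c = D(t^-1) \<in> R, the value D(t^i) in R((t;d)),
  determined by D(t) = - t c t and the Leibniz rule (D(t^-1) = c).\<close>
definition ls_der_t :: "('a, 'm) ring_scheme \<Rightarrow> ('a \<Rightarrow> 'a) \<Rightarrow> 'a \<Rightarrow> int \<Rightarrow> int \<Rightarrow> 'a" where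
  "ls_der_t R d c i =
     (if 0 < i then
        finsum (LS R d) (\<lambda>a. ls_mult R d (ls_t R a)
            (ls_mult R d (\<lambda>j. a_inv R (ls_mult R d (ls_t R 1) (ls_mult R d (ls_const R c) (ls_t R 1)) j))
               (ls_t R (i - 1 - a)))) {0..i - 1}
      else if i < 0 then
        finsum (LS R d) (\<lambda>a. ls_mult R d (ls_t R (- a))
            (ls_mult R d (ls_const R c) (ls_t R (- (- i - 1 - a))))) {0..- i - 1}
      else (\<lambda>j. zero R))"

text \<open>Extension of the derivation D of R to R((t;d)) by D(t) = -t c t, termwise on series:
  D(\<Sum> t^i a_i) = \<Sum> (D(t^i) a_i + t^i D(a_i)).\<close>
definition ls_der :: "('a, 'm) ring_scheme \<Rightarrow> ('a \<Rightarrow> 'a) \<Rightarrow> ('a \<Rightarrow> 'a) \<Rightarrow> 'a \<Rightarrow> (int \<Rightarrow> 'a) \<Rightarrow> int \<Rightarrow> 'a" where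
  "ls_der R d D c f =
     (\<lambda>n. add R (ls_sum R (\<lambda>i. ls_mult R d (ls_der_t R d c i) (ls_const R (f i))) n) (D (f n)))"

definition ls_sc :: "('k \<Rightarrow> 'a \<Rightarrow> 'a) \<Rightarrow> 'k \<Rightarrow> (int \<Rightarrow> 'a) \<Rightarrow> int \<Rightarrow> 'a" where
  "ls_sc sc c f = (\<lambda>i. sc c (f i))"

definition ls_map :: "('a \<Rightarrow> 'b) \<Rightarrow> (int \<Rightarrow> 'a) \<Rightarrow> int \<Rightarrow> 'b" where
  "ls_map h f = (\<lambda>i. h (f i))"

definition k_alg_hom :: "('a, 'm) ring_scheme \<Rightarrow> ('b, 'n) ring_scheme \<Rightarrow> ('k \<Rightarrow> 'a \<Rightarrow> 'a) \<Rightarrow> ('k \<Rightarrow> 'b \<Rightarrow> 'b)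
    \<Rightarrow> ('a \<Rightarrow> 'b) \<Rightarrow> bool" where
  "k_alg_hom R S scR scS h \<longleftrightarrow> h \<in> ring_hom R S \<and>
     (\<forall>c x. x \<in> carrier R \<longrightarrow> h (scR c x) = scS c (h x))"

end

theory Submission
  imports Defs "HOL-Algebra.Subrings"
begin



section \<open>Free algebra level\<close>

lemma fmul_Nil: "fmul f g [] = f [] * g []"
  by (simp add: fmul_def)

lemma fmul_Cons: "fmul f g (x # w) = f [] * g (x # w) + fmul (\<lambda>v. f (x # v)) g w"
proof -
  have "fmul f g (x # w) = (\<Sum>i\<le>Suc (length w). f (take i (x # w)) * g (drop i (x # w)))"
    by (simp add: fmul_def atLeast0AtMost)
  also have "\<dots> = f [] * g (x # w) + (\<Sum>i\<le>length w. f (take (Suc i) (x # w)) * g (drop (Suc i) (x # w)))"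
    by (subst sum.atMost_Suc_shift) simp
  also have "\<dots> = f [] * g (x # w) + fmul (\<lambda>v. f (x # v)) g w"
    by (simp add: fmul_def atLeast0AtMost)
  finally show ?thesis .
qed

lemma fmul_fadd_left: "fmul (fadd f g) h = fadd (fmul f h) (fmul g h)"
  by (rule ext) (simp add: fmul_def fadd_def sum.distrib distrib_right)

lemma fmul_fadd_right: "fmul h (fadd f g) = fadd (fmul h f) (fmul h g)"
  by (rule ext) (simp add: fmul_def fadd_def sum.distrib distrib_left)

lemma fmul_fsc_left: "fmul (fsc c f) g = fsc c (fmul f g)"
  by (rule ext) (simp add: fmul_def fsc_def sum_distrib_left mult.assoc)

lemma fmul_fsc_right: "fmul f (fsc c g) = fsc c (fmul f g)"
  by (rule ext) (simp add: fmul_def fsc_def sum_distrib_left mult.left_commute)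

lemma fmul_assoc_pt: "fmul (fmul f g) h w = fmul f (fmul g h) w"
proof (induction w arbitrary: f g h)
  case Nil
  then show ?case by (simp add: fmul_Nil mult.assoc)
next
  case (Cons x w)
  have sh: "(\<lambda>v. fmul f g (x # v)) = fadd (fsc (f []) (\<lambda>v. g (x # v))) (fmul (\<lambda>v. f (x # v)) g)"
    by (rule ext) (simp add: fmul_Cons fadd_def fsc_def)
  have "fmul (fmul f g) h (x # w) = fmul f g [] * h (x # w) + fmul (\<lambda>v. fmul f g (x # v)) h w"
    by (rule fmul_Cons)
  also have "\<dots> = f [] * g [] * h (x # w) + (f [] * fmul (\<lambda>v. g (x # v)) h w + fmul (fmul (\<lambda>v. f (x # v)) g) h w)"
    unfolding sh fmul_fadd_left fmul_fsc_left by (simp add: fadd_def fsc_def fmul_Nil)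
  also have "\<dots> = f [] * (g [] * h (x # w) + fmul (\<lambda>v. g (x # v)) h w) + fmul (\<lambda>v. f (x # v)) (fmul g h) w"
    using Cons.IH by (simp add: algebra_simps)
  also have "\<dots> = fmul f (fmul g h) (x # w)"
    by (simp add: fmul_Cons)
  finally show ?case .
qed

lemma fmul_assoc: "fmul (fmul f g) h = fmul f (fmul g h)"
  by (rule ext) (rule fmul_assoc_pt)

lemma fmul_fone_left: "fmul fone g = g"
proof (rule ext)
  fix w show "fmul fone g w = g w"
  proof (cases w)
    case Nil then show ?thesis by (simp add: fmul_Nil fone_def)
  next
    case (Cons x v)
    have "(\<lambda>u. fone (x # u)) = fzero" by (rule ext) (simp add: fone_def fzero_def)
    moreover have "fmul (\<lambda>u. 0) g v = 0" by (simp add: fmul_def)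
    ultimately show ?thesis using Cons by (simp add: fmul_Cons fone_def)
  qed
qed

lemma fmul_fone_right_pt: "fmul g fone w = g w"
proof (induction w arbitrary: g)
  case Nil then show ?case by (simp add: fmul_Nil fone_def)
next
  case (Cons x w) then show ?case by (simp add: fmul_Cons fone_def)
qed

lemma fmul_fone_right: "fmul g fone = g"
  by (rule ext) (rule fmul_fone_right_pt)

lemma fa_carrier_fadd: "f \<in> fa_carrier \<Longrightarrow> g \<in> fa_carrier \<Longrightarrow> fadd f g \<in> fa_carrier"
proof -
  assume "f \<in> fa_carrier" "g \<in> fa_carrier"
  then have "finite ({w. f w \<noteq> 0} \<union> {w. g w \<noteq> 0})" by (simp add: fa_carrier_def)
  moreover have "{w. fadd f g w \<noteq> 0} \<subseteq> {w. f w \<noteq> 0} \<union> {w. g w \<noteq> 0}" by (auto simp: fadd_def)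
  ultimately show ?thesis unfolding fa_carrier_def by (auto elim: finite_subset)
qed

lemma fa_carrier_fsc: "f \<in> fa_carrier \<Longrightarrow> fsc c f \<in> fa_carrier"
  unfolding fa_carrier_def fsc_def by (auto elim: rev_finite_subset)

lemma fa_carrier_fzero: "fzero \<in> fa_carrier"
  by (simp add: fa_carrier_def fzero_def)

lemma fa_carrier_fone: "(fone :: 'l list \<Rightarrow> 'k::field) \<in> fa_carrier"
proof -
  have "{w. (fone :: 'l list \<Rightarrow> 'k::field) w \<noteq> 0} \<subseteq> {[]}" by (auto simp: fone_def split: if_splits)
  then show ?thesis unfolding fa_carrier_def by (auto elim: finite_subset)
qed

lemma fa_carrier_fgen: "(fgen a :: 'l list \<Rightarrow> 'k::field) \<in> fa_carrier"
proof -
  have "{w. (fgen a :: 'l list \<Rightarrow> 'k::field) w \<noteq> 0} \<subseteq> {[a]}" by (auto simp: fgen_def split: if_splits)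
  then show ?thesis unfolding fa_carrier_def by (auto elim: finite_subset)
qed

lemma fa_carrier_fmul: "f \<in> fa_carrier \<Longrightarrow> g \<in> fa_carrier \<Longrightarrow> fmul f g \<in> fa_carrier"
proof -
  assume f: "f \<in> fa_carrier" and g: "g \<in> fa_carrier"
  have "{w. fmul f g w \<noteq> 0} \<subseteq> (\<lambda>(a,b). a @ b) ` ({w. f w \<noteq> 0} \<times> {w. g w \<noteq> 0})"
  proof
    fix w assume "w \<in> {w. fmul f g w \<noteq> 0}"
    then have "(\<Sum>i\<in>{0..length w}. f (take i w) * g (drop i w)) \<noteq> 0" by (simp add: fmul_def)
    then obtain i where "f (take i w) * g (drop i w) \<noteq> 0" by (meson sum.neutral)
    then have "f (take i w) \<noteq> 0" "g (drop i w) \<noteq> 0" by auto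
    moreover have "w = take i w @ drop i w" by simp
    ultimately show "w \<in> (\<lambda>(a,b). a @ b) ` ({w. f w \<noteq> 0} \<times> {w. g w \<noteq> 0})"
      by (metis (mono_tags, lifting) SigmaI case_prod_conv image_eqI mem_Collect_eq)
  qed
  moreover have "finite ((\<lambda>(a,b). a @ b) ` ({w. f w \<noteq> 0} \<times> {w. g w \<noteq> 0}))"
    using f g by (simp add: fa_carrier_def)
  ultimately show ?thesis unfolding fa_carrier_def by (auto elim: finite_subset)
qed

lemma fadd_assoc: "fadd (fadd a b) c = fadd a (fadd b c)"
  by (rule ext) (simp add: fadd_def add.assoc)
lemma fadd_comm: "fadd a b = fadd b a"
  by (rule ext) (simp add: fadd_def add.commute)

lemma fadd_fzero: "fadd fzero a = a"
  by (rule ext) (simp add: fadd_def fzero_def)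

lemmas fa_closed = fa_carrier_fadd fa_carrier_fsc fa_carrier_fzero fa_carrier_fone fa_carrier_fgen fa_carrier_fmul

section \<open>The ideal\<close>

context fixes sm :: "'k::field \<Rightarrow> 'l::ab_group_add \<Rightarrow> 'l" and br :: "'l \<Rightarrow> 'l \<Rightarrow> 'l"
begin

abbreviation "I \<equiv> fa_ideal sm br"

lemma rels_sub: "fa_rels sm br \<subseteq> fa_carrier"
  unfolding fa_rels_def by (auto intro!: fa_closed)

lemma carrier_in_family: "fa_carrier \<in> {J. J \<subseteq> fa_carrier \<and> fa_rels sm br \<subseteq> J \<and> fzero \<in> J
      \<and> (\<forall>f\<in>J. \<forall>g\<in>J. fadd f g \<in> J)
      \<and> (\<forall>f\<in>J. \<forall>g\<in>fa_carrier. fmul f g \<in> J \<and> fmul g f \<in> J)}"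
  using rels_sub by (auto intro!: fa_closed)

lemma I_sub: "I \<subseteq> fa_carrier"
  unfolding fa_ideal_def using carrier_in_family by blast

lemma I_mem: "f \<in> I \<Longrightarrow> f \<in> fa_carrier"
  using I_sub by blast

lemma I_zero: "fzero \<in> I"
  unfolding fa_ideal_def by blast

lemma I_add: "f \<in> I \<Longrightarrow> g \<in> I \<Longrightarrow> fadd f g \<in> I"
  unfolding fa_ideal_def by blast

lemma I_mulR: "f \<in> I \<Longrightarrow> g \<in> fa_carrier \<Longrightarrow> fmul f g \<in> I"
  unfolding fa_ideal_def by blast

lemma I_mulL: "f \<in> I \<Longrightarrow> g \<in> fa_carrier \<Longrightarrow> fmul g f \<in> I"
  unfolding fa_ideal_def by blast

lemma I_rels: "fa_rels sm br \<subseteq> I"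
  unfolding fa_ideal_def by blast

lemma I_sc: "f \<in> I \<Longrightarrow> fsc c f \<in> I"
proof -
  assume "f \<in> I"
  then have "fmul f (fsc c fone) \<in> I" by (rule I_mulR) (intro fa_closed)
  then show ?thesis by (simp add: fmul_fsc_right fmul_fone_right)
qed

definition eqv :: "('l list \<Rightarrow> 'k) \<Rightarrow> ('l list \<Rightarrow> 'k) \<Rightarrow> bool" where
  "eqv f g \<longleftrightarrow> fadd f (fsc (-1) g) \<in> I"

lemma eqv_refl: "eqv f f"
proof -
  have "fadd f (fsc (-1) f) = fzero" by (rule ext) (simp add: fadd_def fsc_def fzero_def)
  then show ?thesis using I_zero by (simp add: eqv_def)
qed

lemma eqv_sym: "eqv f g \<Longrightarrow> eqv g f"
proof -
  assume "eqv f g"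
  then have "fsc (-1) (fadd f (fsc (-1) g)) \<in> I" unfolding eqv_def by (rule I_sc)
  moreover have "fsc (-1) (fadd f (fsc (-1) g)) = fadd g (fsc (-1) f)"
    by (rule ext) (simp add: fadd_def fsc_def)
  ultimately show ?thesis by (simp add: eqv_def)
qed

lemma eqv_trans: "eqv f g \<Longrightarrow> eqv g h \<Longrightarrow> eqv f h"
proof -
  assume "eqv f g" "eqv g h"
  then have "fadd (fadd f (fsc (-1) g)) (fadd g (fsc (-1) h)) \<in> I" unfolding eqv_def by (rule I_add)
  moreover have "fadd (fadd f (fsc (-1) g)) (fadd g (fsc (-1) h)) = fadd f (fsc (-1) h)"
    by (rule ext) (simp add: fadd_def fsc_def)
  ultimately show ?thesis by (simp add: eqv_def)
qed

lemma eqv_fadd: "eqv f f' \<Longrightarrow> eqv g g' \<Longrightarrow> eqv (fadd f g) (fadd f' g')"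
proof -
  assume "eqv f f'" "eqv g g'"
  then have "fadd (fadd f (fsc (-1) f')) (fadd g (fsc (-1) g')) \<in> I" unfolding eqv_def by (rule I_add)
  moreover have "fadd (fadd f (fsc (-1) f')) (fadd g (fsc (-1) g')) = fadd (fadd f g) (fsc (-1) (fadd f' g'))"
    by (rule ext) (simp add: fadd_def fsc_def)
  ultimately show ?thesis by (simp add: eqv_def)
qed

lemma eqv_fsc: "eqv f f' \<Longrightarrow> eqv (fsc c f) (fsc c f')"
proof -
  assume "eqv f f'"
  then have "fsc c (fadd f (fsc (-1) f')) \<in> I" unfolding eqv_def by (rule I_sc)
  moreover have "fsc c (fadd f (fsc (-1) f')) = fadd (fsc c f) (fsc (-1) (fsc c f'))"
    by (rule ext) (simp add: fadd_def fsc_def algebra_simps)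
  ultimately show ?thesis by (simp add: eqv_def)
qed

lemma eqv_fmul: "eqv f f' \<Longrightarrow> eqv g g' \<Longrightarrow> f \<in> fa_carrier \<Longrightarrow> f' \<in> fa_carrier \<Longrightarrow> g \<in> fa_carrier \<Longrightarrow> g' \<in> fa_carrier
  \<Longrightarrow> eqv (fmul f g) (fmul f' g')"
proof -
  assume e: "eqv f f'" "eqv g g'" and c: "f \<in> fa_carrier" "f' \<in> fa_carrier" "g \<in> fa_carrier" "g' \<in> fa_carrier"
  have "fadd (fmul (fadd f (fsc (-1) f')) g) (fmul f' (fadd g (fsc (-1) g'))) \<in> I"
    using e c unfolding eqv_def by (simp add: I_add I_mulR I_mulL)
  moreover have "fadd (fmul (fadd f (fsc (-1) f')) g) (fmul f' (fadd g (fsc (-1) g'))) = fadd (fmul f g) (fsc (-1) (fmul f' g'))"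
    unfolding fmul_fadd_left fmul_fadd_right fmul_fsc_left fmul_fsc_right
    by (rule ext) (simp add: fadd_def fsc_def)
  ultimately show ?thesis by (simp add: eqv_def)
qed

lemma eqv_I: "f \<in> I \<Longrightarrow> eqv f fzero"
proof -
  assume "f \<in> I"
  moreover have "fadd f (fsc (-1) fzero) = f" by (rule ext) (simp add: fadd_def fsc_def fzero_def)
  ultimately show ?thesis by (simp add: eqv_def)
qed

lemma cls_mem: "f \<in> fa_carrier \<Longrightarrow> f \<in> ul_cls sm br f"
  by (simp add: ul_cls_def eqv_refl[unfolded eqv_def])

lemma cls_eq_iff: "f \<in> fa_carrier \<Longrightarrow> g \<in> fa_carrier \<Longrightarrow> ul_cls sm br f = ul_cls sm br g \<longleftrightarrow> eqv f g"
proof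
  assume f: "f \<in> fa_carrier" and g: "g \<in> fa_carrier" and "ul_cls sm br f = ul_cls sm br g"
  then have "f \<in> ul_cls sm br g" using cls_mem by blast
  then show "eqv f g" by (simp add: ul_cls_def eqv_def)
next
  assume f: "f \<in> fa_carrier" and g: "g \<in> fa_carrier" and e: "eqv f g"
  show "ul_cls sm br f = ul_cls sm br g"
    unfolding ul_cls_def using e eqv_trans eqv_sym unfolding eqv_def[symmetric] by blast
qed

lemma rep_cls: "f \<in> fa_carrier \<Longrightarrow> ul_rep (ul_cls sm br f) \<in> fa_carrier \<and> eqv (ul_rep (ul_cls sm br f)) f"
proof -
  assume f: "f \<in> fa_carrier"
  have "ul_rep (ul_cls sm br f) \<in> ul_cls sm br f" unfolding ul_rep_def using someI[of "\<lambda>x. x \<in> ul_cls sm br f" f] cls_mem[OF f] by simp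
  then show ?thesis by (simp add: ul_cls_def eqv_def)
qed

lemma rep_cls_carrier: "f \<in> fa_carrier \<Longrightarrow> ul_rep (ul_cls sm br f) \<in> fa_carrier"
  using rep_cls by blast

lemma rep_cls_eqv: "f \<in> fa_carrier \<Longrightarrow> eqv (ul_rep (ul_cls sm br f)) f"
  using rep_cls by blast

abbreviation "UL \<equiv> UL_ring sm br"

lemma UL_carrier: "carrier UL = ul_cls sm br ` fa_carrier"
  by (auto simp: UL_ring_def)

lemma cls_in: "f \<in> fa_carrier \<Longrightarrow> ul_cls sm br f \<in> carrier UL"
  by (simp add: UL_carrier)

lemma cls_add: "f \<in> fa_carrier \<Longrightarrow> g \<in> fa_carrier \<Longrightarrow> add UL (ul_cls sm br f) (ul_cls sm br g) = ul_cls sm br (fadd f g)"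
  by (simp add: UL_ring_def cls_eq_iff fa_closed rep_cls_carrier eqv_fadd rep_cls_eqv)

lemma cls_mult: "f \<in> fa_carrier \<Longrightarrow> g \<in> fa_carrier \<Longrightarrow> mult UL (ul_cls sm br f) (ul_cls sm br g) = ul_cls sm br (fmul f g)"
  by (simp add: UL_ring_def cls_eq_iff fa_closed rep_cls_carrier eqv_fmul rep_cls_eqv)

lemma cls_sc: "f \<in> fa_carrier \<Longrightarrow> ul_sc sm br c (ul_cls sm br f) = ul_cls sm br (fsc c f)"
  by (simp add: ul_sc_def cls_eq_iff fa_closed rep_cls_carrier eqv_fsc rep_cls_eqv)

lemma UL_one: "one UL = ul_cls sm br fone" and UL_zero: "zero UL = ul_cls sm br fzero"
  by (simp_all add: UL_ring_def)

lemma UL_ring: "ring UL"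
proof (rule ringI)
  show "abelian_group UL"
  proof (rule abelian_groupI)
    fix x y z assume x: "x \<in> carrier UL" and y: "y \<in> carrier UL" and z: "z \<in> carrier UL"
    then obtain a b c where a: "a \<in> fa_carrier" "x = ul_cls sm br a" and b: "b \<in> fa_carrier" "y = ul_cls sm br b"
       and c: "c \<in> fa_carrier" "z = ul_cls sm br c"
      by (auto simp: UL_carrier)
    show "x \<oplus>\<^bsub>UL\<^esub> y \<in> carrier UL" using a b by (simp add: cls_add cls_in fa_closed)
    show "x \<oplus>\<^bsub>UL\<^esub> y \<oplus>\<^bsub>UL\<^esub> z = x \<oplus>\<^bsub>UL\<^esub> (y \<oplus>\<^bsub>UL\<^esub> z)"
      using a b c by (simp add: cls_add fa_closed fadd_assoc)
    show "x \<oplus>\<^bsub>UL\<^esub> y = y \<oplus>\<^bsub>UL\<^esub> x"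
      using a b by (simp add: cls_add fadd_comm)
    show "\<zero>\<^bsub>UL\<^esub> \<oplus>\<^bsub>UL\<^esub> x = x"
      using a by (simp add: UL_zero cls_add fa_closed fadd_fzero)
    show "\<exists>y\<in>carrier UL. y \<oplus>\<^bsub>UL\<^esub> x = \<zero>\<^bsub>UL\<^esub>"
    proof (intro bexI)
      have "fadd (fsc (-1) a) a = fzero" by (rule ext) (simp add: fadd_def fsc_def fzero_def)
      then show "ul_cls sm br (fsc (-1) a) \<oplus>\<^bsub>UL\<^esub> x = \<zero>\<^bsub>UL\<^esub>"
        using a by (simp add: UL_zero cls_add fa_closed)
      show "ul_cls sm br (fsc (-1) a) \<in> carrier UL" using a by (simp add: cls_in fa_closed)
    qed
  next
    show "\<zero>\<^bsub>UL\<^esub> \<in> carrier UL" by (simp add: UL_zero cls_in fa_closed)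
  qed
next
  show "monoid UL"
  proof (rule monoidI)
    fix x y z assume x: "x \<in> carrier UL" and y: "y \<in> carrier UL" and z: "z \<in> carrier UL"
    then obtain a b c where a: "a \<in> fa_carrier" "x = ul_cls sm br a" and b: "b \<in> fa_carrier" "y = ul_cls sm br b"
       and c: "c \<in> fa_carrier" "z = ul_cls sm br c"
      by (auto simp: UL_carrier)
    show "x \<otimes>\<^bsub>UL\<^esub> y \<in> carrier UL" using a b by (simp add: cls_mult cls_in fa_closed)
    show "x \<otimes>\<^bsub>UL\<^esub> y \<otimes>\<^bsub>UL\<^esub> z = x \<otimes>\<^bsub>UL\<^esub> (y \<otimes>\<^bsub>UL\<^esub> z)"
      using a b c by (simp add: cls_mult fa_closed fmul_assoc)
  next
    fix x assume x: "x \<in> carrier UL"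
    then obtain a where a: "a \<in> fa_carrier" "x = ul_cls sm br a" by (auto simp: UL_carrier)
    show "\<one>\<^bsub>UL\<^esub> \<otimes>\<^bsub>UL\<^esub> x = x" using a by (simp add: UL_one cls_mult fa_closed fmul_fone_left)
    show "x \<otimes>\<^bsub>UL\<^esub> \<one>\<^bsub>UL\<^esub> = x" using a by (simp add: UL_one cls_mult fa_closed fmul_fone_right)
  next
    show "\<one>\<^bsub>UL\<^esub> \<in> carrier UL" by (simp add: UL_one cls_in fa_closed)
  qed
next
  fix x y z assume x: "x \<in> carrier UL" and y: "y \<in> carrier UL" and z: "z \<in> carrier UL"
  then obtain a b c where a: "a \<in> fa_carrier" "x = ul_cls sm br a" and b: "b \<in> fa_carrier" "y = ul_cls sm br b"
     and c: "c \<in> fa_carrier" "z = ul_cls sm br c"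
    by (auto simp: UL_carrier)
  show "(x \<oplus>\<^bsub>UL\<^esub> y) \<otimes>\<^bsub>UL\<^esub> z = x \<otimes>\<^bsub>UL\<^esub> z \<oplus>\<^bsub>UL\<^esub> y \<otimes>\<^bsub>UL\<^esub> z"
    using a b c by (simp add: cls_mult cls_add fa_closed fmul_fadd_left)
  show "z \<otimes>\<^bsub>UL\<^esub> (x \<oplus>\<^bsub>UL\<^esub> y) = z \<otimes>\<^bsub>UL\<^esub> x \<oplus>\<^bsub>UL\<^esub> z \<otimes>\<^bsub>UL\<^esub> y"
    using a b c by (simp add: cls_mult cls_add fa_closed fmul_fadd_right)
qed

end



context ring begin
lemma xx_canc2: "a \<in> carrier R \<Longrightarrow> b \<in> carrier R \<Longrightarrow> a \<oplus> (b \<oplus> \<ominus> a) = b"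
  by (simp add: a_lcomm[of a b] r_neg)
lemma xx_canc3: "a \<in> carrier R \<Longrightarrow> b \<in> carrier R \<Longrightarrow> c \<in> carrier R \<Longrightarrow> a \<oplus> (b \<oplus> (c \<oplus> \<ominus> a)) = b \<oplus> c"
proof -
  assume c: "a \<in> carrier R" "b \<in> carrier R" "c \<in> carrier R"
  then have "a \<oplus> (b \<oplus> (c \<oplus> \<ominus> a)) = b \<oplus> (a \<oplus> (c \<oplus> \<ominus> a))" by (simp add: a_lcomm[of a b])
  also have "\<dots> = b \<oplus> c" using c by (simp add: xx_canc2)
  finally show ?thesis .
qed
lemma xx_der_add: "x \<in> carrier R \<Longrightarrow> y \<in> carrier R \<Longrightarrow> g \<in> carrier R \<Longrightarrow>
  (x\<oplus>y)\<otimes>g \<ominus> g\<otimes>(x\<oplus>y) = (x\<otimes>g \<ominus> g\<otimes>x) \<oplus> (y\<otimes>g \<ominus> g\<otimes>y)"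
  by (simp add: minus_eq l_distr r_distr minus_add a_ac)
lemma xx_der_mult: "x \<in> carrier R \<Longrightarrow> y \<in> carrier R \<Longrightarrow> g \<in> carrier R \<Longrightarrow>
  (x\<otimes>y)\<otimes>g \<ominus> g\<otimes>(x\<otimes>y) = (x\<otimes>g \<ominus> g\<otimes>x)\<otimes>y \<oplus> x\<otimes>(y\<otimes>g \<ominus> g\<otimes>y)"
proof -
  assume c: "x \<in> carrier R" "y \<in> carrier R" "g \<in> carrier R"
  have "(x\<otimes>g \<ominus> g\<otimes>x)\<otimes>y \<oplus> x\<otimes>(y\<otimes>g \<ominus> g\<otimes>y) = (x\<otimes>g\<otimes>y \<ominus> g\<otimes>x\<otimes>y) \<oplus> (x\<otimes>y\<otimes>g \<ominus> x\<otimes>g\<otimes>y)"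
    using c by (simp add: minus_eq l_distr r_distr l_minus r_minus m_assoc)
  also have "\<dots> = x\<otimes>y\<otimes>g \<ominus> g\<otimes>x\<otimes>y"
    using c by (simp add: minus_eq a_ac xx_canc3)
  finally show ?thesis using c by (simp add: m_assoc)
qed
lemma xx_cancel1: "a \<in> carrier R \<Longrightarrow> c \<in> carrier R \<Longrightarrow> (a \<oplus> c) \<ominus> a = c"
  by (simp add: minus_eq a_ac xx_canc2)
end

lemma K_ring: "ring (K_ring :: 'k::field ring)"
proof (rule ringI)
  show "abelian_group (K_ring :: 'k ring)"
    by (rule abelian_groupI) (auto simp: K_ring_def intro: exI[of _ "-x" for x])
  show "monoid (K_ring :: 'k ring)"
    by (rule monoidI) (auto simp: K_ring_def)
qed (auto simp: K_ring_def algebra_simps)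

lemma K_simps [simp]: "carrier K_ring = UNIV" "mult K_ring = (*)" "add K_ring = (+)" "one K_ring = 1" "zero K_ring = 0"
  by (simp_all add: K_ring_def)

context fixes sm :: "'k::field \<Rightarrow> 'l::ab_group_add \<Rightarrow> 'l" and br :: "'l \<Rightarrow> 'l \<Rightarrow> 'l"
begin

interpretation U: ring "UL_ring sm br" by (rule UL_ring)

lemma gen_in: "ul_gen sm br a \<in> carrier (UL_ring sm br)"
  by (simp add: ul_gen_def cls_in fa_closed)

lemma gen_comm: "ul_gen sm br a \<otimes>\<^bsub>UL_ring sm br\<^esub> ul_gen sm br b
   = ul_gen sm br b \<otimes>\<^bsub>UL_ring sm br\<^esub> ul_gen sm br a \<oplus>\<^bsub>UL_ring sm br\<^esub> ul_gen sm br (br a b)"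
proof -
  have "fadd (fmul (fgen a) (fgen b)) (fsc (-1) (fadd (fmul (fgen b) (fgen a)) (fgen (br a b)))) \<in> fa_rels sm br"
    unfolding fa_rels_def by blast
  then have "eqv sm br (fmul (fgen a) (fgen b)) (fadd (fmul (fgen b) (fgen a)) (fgen (br a b)))"
    unfolding eqv_def using I_rels by blast
  then have "ul_cls sm br (fmul (fgen a) (fgen b)) = ul_cls sm br (fadd (fmul (fgen b) (fgen a)) (fgen (br a b)))"
    by (simp add: cls_eq_iff fa_closed)
  then show ?thesis by (simp add: ul_gen_def cls_mult cls_add fa_closed)
qed

lemma der_gen: "ul_der sm br s (ul_gen sm br n) = ul_gen sm br (br n s)"
  unfolding ul_der_def gen_comm[of n s] by (simp add: U.xx_cancel1 gen_in)

lemma sc_cls: "ul_sc sm br c (one (UL_ring sm br)) = ul_cls sm br (fsc c fone)"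
  by (simp add: UL_one cls_sc fa_closed)

lemma sc_in: "ul_sc sm br c (one (UL_ring sm br)) \<in> carrier (UL_ring sm br)"
  by (simp add: sc_cls cls_in fa_closed)

lemma sc_comm: "X \<in> carrier (UL_ring sm br) \<Longrightarrow>
   ul_sc sm br c (one (UL_ring sm br)) \<otimes>\<^bsub>UL_ring sm br\<^esub> X = X \<otimes>\<^bsub>UL_ring sm br\<^esub> ul_sc sm br c (one (UL_ring sm br))"
  by (auto simp: UL_carrier sc_cls cls_mult fa_closed fmul_fsc_left fmul_fsc_right fmul_fone_left fmul_fone_right)

lemma der_sc: "ul_der sm br s (ul_sc sm br c (one (UL_ring sm br))) = zero (UL_ring sm br)"
  unfolding ul_der_def sc_comm[OF gen_in] by (simp add: U.r_neg sc_in gen_in U.minus_eq)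

lemma sc_zero: "ul_sc sm br 0 (one (UL_ring sm br)) = zero (UL_ring sm br)"
proof -
  have "fsc 0 fone = (fzero :: 'l list \<Rightarrow> 'k)" by (rule ext) (simp add: fsc_def fzero_def)
  then show ?thesis by (simp add: sc_cls UL_zero)
qed

lemma sc_one: "ul_sc sm br 1 (one (UL_ring sm br)) = one (UL_ring sm br)"
proof -
  have "fsc 1 fone = (fone :: 'l list \<Rightarrow> 'k)" by (rule ext) (simp add: fsc_def)
  then show ?thesis using sc_cls[of 1] by (simp add: UL_one)
qed

lemma sc_neg: "ul_sc sm br (-1) (one (UL_ring sm br)) = \<ominus>\<^bsub>UL_ring sm br\<^esub> one (UL_ring sm br)"
proof -
  have "fadd (fsc (-1) fone) fone = (fzero :: 'l list \<Rightarrow> 'k)" by (rule ext) (simp add: fsc_def fadd_def fzero_def)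
  then have "ul_sc sm br (-1) (one (UL_ring sm br)) \<oplus>\<^bsub>UL_ring sm br\<^esub> one (UL_ring sm br) = zero (UL_ring sm br)"
    using sc_cls[of "-1"] by (simp add: UL_one UL_zero cls_add fa_closed)
  then show ?thesis by (intro U.minus_equality[symmetric]) (simp_all add: sc_in)
qed

lemma un_sub: "un_set sm br N \<subseteq> carrier (UL_ring sm br)"
proof
  fix X assume "X \<in> un_set sm br N"
  then show "X \<in> carrier (UL_ring sm br)"
    by induction (auto simp: sc_in gen_in)
qed

lemma un_subring: "subring (un_set sm br N) (UL_ring sm br)"
proof (rule U.subringI)
  show "un_set sm br N \<subseteq> carrier (UL_ring sm br)" by (rule un_sub)
  show "\<one>\<^bsub>UL_ring sm br\<^esub> \<in> un_set sm br N" using un_set.scal[of sm br 1 N] by (simp add: sc_one)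
  fix h assume h: "h \<in> un_set sm br N"
  then have "ul_sc sm br (-1) (one (UL_ring sm br)) \<otimes>\<^bsub>UL_ring sm br\<^esub> h \<in> un_set sm br N"
    by (intro un_set.mult un_set.scal)
  then show "\<ominus>\<^bsub>UL_ring sm br\<^esub> h \<in> un_set sm br N"
    using h un_sub[of N] U.l_minus[of "one (UL_ring sm br)" h] by (auto simp: sc_neg)
qed (auto intro: un_set.add un_set.mult)

lemma UN_ring_ring: "ring (UN_ring sm br N)"
  unfolding UN_ring_def by (rule U.subring_is_ring[OF un_subring])

lemma UN_simps [simp]: "carrier (UN_ring sm br N) = un_set sm br N" "mult (UN_ring sm br N) = mult (UL_ring sm br)"
  "add (UN_ring sm br N) = add (UL_ring sm br)" "one (UN_ring sm br N) = one (UL_ring sm br)"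
  "zero (UN_ring sm br N) = zero (UL_ring sm br)"
  by (simp_all add: UN_ring_def)

lemma der_un:
  assumes Ns: "\<And>n. n \<in> N \<Longrightarrow> br n s \<in> N" and X: "X \<in> un_set sm br N"
  shows "ul_der sm br s X \<in> un_set sm br N"
  using X
proof induction
  case (scal c)
  then show ?case using subringE(2)[OF un_subring] by (simp add: der_sc)
next
  case (gen n)
  then show ?case by (simp add: der_gen Ns un_set.gen)
next
  case (add X Y)
  then have "X \<in> carrier (UL_ring sm br)" "Y \<in> carrier (UL_ring sm br)" using un_sub by auto
  with add show ?case unfolding ul_der_def by (simp add: U.xx_der_add gen_in un_set.add)
next
  case (mult X Y)
  then have "X \<in> carrier (UL_ring sm br)" "Y \<in> carrier (UL_ring sm br)" using un_sub by auto
  with mult show ?case unfolding ul_der_def by (simp add: U.xx_der_mult gen_in un_set.add un_set.mult)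
qed

lemma der_eps:
  assumes Ns: "\<And>n. n \<in> N \<Longrightarrow> br n s \<in> N" and X: "X \<in> un_set sm br N"
    and eh: "\<epsilon> \<in> ring_hom (UN_ring sm br N) K_ring" and e0: "\<forall>n\<in>N. \<epsilon> (ul_gen sm br n) = 0"
  shows "\<epsilon> (ul_der sm br s X) = 0"
  using X
proof induction
  case (scal c)
  have "\<epsilon> (zero (UN_ring sm br N)) = zero K_ring"
    by (rule ring_hom_zero[OF eh UN_ring_ring K_ring])
  then show ?case by (simp add: der_sc)
next
  case (gen n)
  then show ?case by (simp add: der_gen Ns e0)
next
  case (add X Y)
  then have "X \<in> carrier (UL_ring sm br)" "Y \<in> carrier (UL_ring sm br)" using un_sub by auto
  with add show ?case unfolding ul_der_def
    using ring_hom_add[OF eh, of "ul_der sm br s X" "ul_der sm br s Y"] der_un[OF Ns add(1)] der_un[OF Ns add(2)]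
    by (simp add: U.xx_der_add gen_in ul_der_def)
next
  case (mult X Y)
  then have "X \<in> carrier (UL_ring sm br)" "Y \<in> carrier (UL_ring sm br)" using un_sub by auto
  moreover have "ul_der sm br s X \<in> un_set sm br N" "ul_der sm br s Y \<in> un_set sm br N"
    using der_un[OF Ns mult(1)] der_un[OF Ns mult(2)] by auto
  ultimately show ?case using mult unfolding ul_der_def
    using ring_hom_add[OF eh, of "ul_der sm br s X \<otimes>\<^bsub>UL_ring sm br\<^esub> Y" "X \<otimes>\<^bsub>UL_ring sm br\<^esub> ul_der sm br s Y"]
       ring_hom_mult[OF eh, of "ul_der sm br s X" Y] ring_hom_mult[OF eh, of X "ul_der sm br s Y"]
    by (simp add: U.xx_der_mult gen_in ul_der_def un_set.mult)
qed

end



definition lsb :: "('a,'m) ring_scheme \<Rightarrow> (int \<Rightarrow> 'a) \<Rightarrow> int \<Rightarrow> bool" where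
  "lsb R f a \<longleftrightarrow> (\<forall>n<a. f n = zero R)"

definition lsbase :: "('a,'m) ring_scheme \<Rightarrow> bool" where
  "lsbase R \<longleftrightarrow> abelian_group R \<and> (\<forall>x\<in>carrier R. \<forall>y\<in>carrier R. x \<otimes>\<^bsub>R\<^esub> y \<in> carrier R)
     \<and> one R \<in> carrier R \<and> (\<forall>x\<in>carrier R. x \<otimes>\<^bsub>R\<^esub> zero R = zero R \<and> zero R \<otimes>\<^bsub>R\<^esub> x = zero R)"

definition isder :: "('a,'m) ring_scheme \<Rightarrow> ('a \<Rightarrow> 'a) \<Rightarrow> bool" where
  "isder R d \<longleftrightarrow> (\<forall>x\<in>carrier R. d x \<in> carrier R) \<and> d (zero R) = zero R"

lemma LS_simps [simp]: "carrier (LS R d) = ls_carrier R" "mult (LS R d) = ls_mult R d" "one (LS R d) = ls_one R"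
  "zero (LS R d) = (\<lambda>i. zero R)" "add (LS R d) = (\<lambda>f g i. add R (f i) (g i))"
  by (simp_all add: LS_def)

lemma ls_carrier_iff: "f \<in> ls_carrier R \<longleftrightarrow> (\<forall>i. f i \<in> carrier R) \<and> (\<exists>a. lsb R f a)"
  by (auto simp: ls_carrier_def lsb_def)

lemma lsbase_ag: "lsbase R \<Longrightarrow> abelian_group R" by (simp add: lsbase_def)
lemma lsbase_mult: "lsbase R \<Longrightarrow> x \<in> carrier R \<Longrightarrow> y \<in> carrier R \<Longrightarrow> x \<otimes>\<^bsub>R\<^esub> y \<in> carrier R" by (simp add: lsbase_def)
lemma lsbase_one: "lsbase R \<Longrightarrow> one R \<in> carrier R" by (simp add: lsbase_def)
lemma lsbase_r0: "lsbase R \<Longrightarrow> x \<in> carrier R \<Longrightarrow> x \<otimes>\<^bsub>R\<^esub> zero R = zero R" by (simp add: lsbase_def)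
lemma lsbase_l0: "lsbase R \<Longrightarrow> x \<in> carrier R \<Longrightarrow> zero R \<otimes>\<^bsub>R\<^esub> x = zero R" by (simp add: lsbase_def)

lemma isder_closed: "isder R d \<Longrightarrow> x \<in> carrier R \<Longrightarrow> d x \<in> carrier R" by (simp add: isder_def)
lemma isder_zero: "isder R d \<Longrightarrow> d (zero R) = zero R" by (simp add: isder_def)

lemma dpow_closed: "isder R d \<Longrightarrow> x \<in> carrier R \<Longrightarrow> (d ^^ k) x \<in> carrier R"
  by (induction k) (auto simp: isder_closed)

lemma dpow_zero: "isder R d \<Longrightarrow> (d ^^ k) (zero R) = zero R"
  by (induction k) (auto simp: isder_zero)

lemma ls_mult_set_sub:
  assumes "lsb R f a" "lsb R g b"
  shows "{(j :: int, k :: nat). f (n - j - int k) \<noteq> zero R \<and> g j \<noteq> zero R} \<subseteq> {b..n-a} \<times> {..nat (n-a-b)}"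
proof
  fix p assume "p \<in> {(j :: int, k :: nat). f (n - j - int k) \<noteq> zero R \<and> g j \<noteq> zero R}"
  then obtain j k where p: "p = (j, k)" and f: "f (n - j - int k) \<noteq> zero R" and g: "g j \<noteq> zero R" by auto
  from g assms(2) have "b \<le> j" unfolding lsb_def by (meson not_less)
  moreover from f assms(1) have "a \<le> n - j - int k" unfolding lsb_def by (meson not_less)
  ultimately show "p \<in> {b..n-a} \<times> {..nat (n-a-b)}" using p by auto
qed

lemma ls_mult_set_finite:
  assumes "lsb R f a" "lsb R g b"
  shows "finite {(j :: int, k :: nat). f (n - j - int k) \<noteq> zero R \<and> g j \<noteq> zero R}"
  by (rule finite_subset[OF ls_mult_set_sub[OF assms]]) auto

lemma ls_mult_set_empty:
  assumes "lsb R f a" "lsb R g b" "n < a + b"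
  shows "{(j :: int, k :: nat). f (n - j - int k) \<noteq> zero R \<and> g j \<noteq> zero R} = {}"
  using ls_mult_set_sub[OF assms(1,2), of n] assms(3) by force

lemma ls_mult_lsb:
  assumes "abelian_group R" "lsb R f a" "lsb R g b"
  shows "lsb R (ls_mult R d f g) (a + b)"
proof -
  interpret R: abelian_group R by fact
  show ?thesis unfolding lsb_def
  proof (intro allI impI)
    fix n :: int assume n: "n < a + b"
    show "ls_mult R d f g n = zero R"
      unfolding ls_mult_def ls_mult_set_empty[OF assms(2,3) n] by simp
  qed
qed

lemma ls_mult_coeff_closed:
  assumes R: "lsbase R" and d: "isder R d" and f: "\<forall>i. f i \<in> carrier R" and g: "\<forall>i. g i \<in> carrier R"
  shows "ls_mult R d f g n \<in> carrier R"
proof -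
  interpret R: abelian_group R using R by (simp add: lsbase_def)
  show ?thesis unfolding ls_mult_def
    by (rule R.finsum_closed) (auto simp: Pi_def intro!: R.add.int_pow_closed lsbase_mult[OF R] dpow_closed[OF d] f[rule_format] g[rule_format])
qed

lemma ls_mult_closed:
  assumes R: "lsbase R" and d: "isder R d" and f: "f \<in> ls_carrier R" and g: "g \<in> ls_carrier R"
  shows "ls_mult R d f g \<in> ls_carrier R"
proof -
  from f g obtain a b where "lsb R f a" "lsb R g b" and fc: "\<forall>i. f i \<in> carrier R" and gc: "\<forall>i. g i \<in> carrier R"
    by (auto simp: ls_carrier_iff)
  then show ?thesis using ls_mult_lsb[OF lsbase_ag[OF R]] ls_mult_coeff_closed[OF R d fc gc]
    by (auto simp: ls_carrier_iff intro!: exI[of _ "a+b"])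
qed

lemma ls_mult_zero_r: "abelian_group R \<Longrightarrow> ls_mult R d f (\<lambda>i. zero R) = (\<lambda>i. zero R)"
  by (simp add: ls_mult_def abelian_monoid.finsum_empty[OF abelian_group.axioms(1)])

lemma ls_mult_zero_l: "abelian_group R \<Longrightarrow> ls_mult R d (\<lambda>i. zero R) f = (\<lambda>i. zero R)"
  by (simp add: ls_mult_def abelian_monoid.finsum_empty[OF abelian_group.axioms(1)])

lemma lsbaseI:
  assumes "abelian_group R" "\<And>x y. x\<in>carrier R \<Longrightarrow> y\<in>carrier R \<Longrightarrow> x \<otimes>\<^bsub>R\<^esub> y \<in> carrier R"
     "one R \<in> carrier R" "\<And>x. x\<in>carrier R \<Longrightarrow> x \<otimes>\<^bsub>R\<^esub> zero R = zero R"
     "\<And>x. x\<in>carrier R \<Longrightarrow> zero R \<otimes>\<^bsub>R\<^esub> x = zero R"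
  shows "lsbase R"
  using assms by (simp add: lsbase_def)

lemma LS_ag:
  assumes R: "abelian_group R"
  shows "abelian_group (LS R d)"
proof -
  interpret R: abelian_group R by fact
  show ?thesis
  proof (rule abelian_groupI)
    fix x y assume x: "x \<in> carrier (LS R d)" and y: "y \<in> carrier (LS R d)"
    then obtain a b where "lsb R x a" "lsb R y b" "\<forall>i. x i \<in> carrier R" "\<forall>i. y i \<in> carrier R"
      by (auto simp: ls_carrier_iff)
    then show "x \<oplus>\<^bsub>LS R d\<^esub> y \<in> carrier (LS R d)"
      by (auto simp: ls_carrier_iff lsb_def intro!: exI[of _ "min a b"])
    show "x \<oplus>\<^bsub>LS R d\<^esub> y = y \<oplus>\<^bsub>LS R d\<^esub> x" using x y by (auto simp: ls_carrier_iff R.a_comm)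
  next
    show "\<zero>\<^bsub>LS R d\<^esub> \<in> carrier (LS R d)" by (auto simp: ls_carrier_iff lsb_def)
  next
    fix x y z assume "x \<in> carrier (LS R d)" "y \<in> carrier (LS R d)" "z \<in> carrier (LS R d)"
    then show "x \<oplus>\<^bsub>LS R d\<^esub> y \<oplus>\<^bsub>LS R d\<^esub> z = x \<oplus>\<^bsub>LS R d\<^esub> (y \<oplus>\<^bsub>LS R d\<^esub> z)"
      by (auto simp: ls_carrier_iff R.a_assoc)
  next
    fix x assume x: "x \<in> carrier (LS R d)"
    then show "\<zero>\<^bsub>LS R d\<^esub> \<oplus>\<^bsub>LS R d\<^esub> x = x" by (auto simp: ls_carrier_iff)
    from x obtain a where a: "lsb R x a" "\<forall>i. x i \<in> carrier R" by (auto simp: ls_carrier_iff)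
    show "\<exists>y\<in>carrier (LS R d). y \<oplus>\<^bsub>LS R d\<^esub> x = \<zero>\<^bsub>LS R d\<^esub>"
    proof (intro bexI)
      show "(\<lambda>i. \<ominus>\<^bsub>R\<^esub> x i) \<oplus>\<^bsub>LS R d\<^esub> x = \<zero>\<^bsub>LS R d\<^esub>" using a by (auto simp: R.l_neg)
      show "(\<lambda>i. \<ominus>\<^bsub>R\<^esub> x i) \<in> carrier (LS R d)" using a by (auto simp: ls_carrier_iff lsb_def)
    qed
  qed
qed

lemma LS_lsbase:
  assumes R: "lsbase R" and d: "isder R d"
  shows "lsbase (LS R d)"
proof (rule lsbaseI)
  show "abelian_group (LS R d)" by (rule LS_ag[OF lsbase_ag[OF R]])
  fix x y assume x: "x \<in> carrier (LS R d)" and y: "y \<in> carrier (LS R d)"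
  then show "x \<otimes>\<^bsub>LS R d\<^esub> y \<in> carrier (LS R d)" by (simp add: ls_mult_closed[OF R d])
next
  show "\<one>\<^bsub>LS R d\<^esub> \<in> carrier (LS R d)"
    using abelian_monoid.zero_closed[OF abelian_group.axioms(1)[OF lsbase_ag[OF R]]] lsbase_one[OF R]
    by (auto simp: ls_carrier_iff lsb_def ls_one_def intro!: exI[of _ 0])
next
qed (simp_all add: ls_mult_zero_r ls_mult_zero_l lsbase_ag[OF R])

lemma LS_finsum_pt:
  assumes R: "abelian_group R" and A: "finite A" and F: "\<forall>a\<in>A. F a \<in> ls_carrier R"
  shows "finsum (LS R d) F A n = finsum R (\<lambda>a. F a n) A"
  using A F
proof (induction A rule: finite_induct)
  case empty
  interpret L: abelian_group "LS R d" by (rule LS_ag[OF R])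
  interpret R: abelian_group R by fact
  show ?case by simp
next
  case (insert x A)
  interpret L: abelian_group "LS R d" by (rule LS_ag[OF R])
  interpret R: abelian_group R by fact
  have "finsum (LS R d) F (insert x A) = F x \<oplus>\<^bsub>LS R d\<^esub> finsum (LS R d) F A"
    using insert by (intro L.finsum_insert) (auto simp: Pi_def)
  then have "finsum (LS R d) F (insert x A) n = add R (F x n) (finsum (LS R d) F A n)" by simp
  also have "\<dots> = add R (F x n) (finsum R (\<lambda>a. F a n) A)" using insert by simp
  also have "\<dots> = finsum R (\<lambda>a. F a n) (insert x A)"
    using insert by (intro R.finsum_insert[symmetric]) (auto simp: Pi_def ls_carrier_iff)
  finally show ?case .
qed




lemma lsb_mono: "lsb R f a \<Longrightarrow> b \<le> a \<Longrightarrow> lsb R f b"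
  by (simp add: lsb_def)

lemma lsb_eq: "lsb R f a \<Longrightarrow> a = b \<Longrightarrow> lsb R f b"
  by simp

lemma ls_t_carrier: "lsbase R \<Longrightarrow> ls_t R a \<in> ls_carrier R"
  using abelian_monoid.zero_closed[OF abelian_group.axioms(1)[OF lsbase_ag]] lsbase_one
  by (auto simp: ls_carrier_iff lsb_def ls_t_def intro!: exI[of _ a])

lemma ls_t_lsb: "lsb R (ls_t R a) a"
  by (simp add: lsb_def ls_t_def)

lemma ls_const_carrier: "lsbase R \<Longrightarrow> c \<in> carrier R \<Longrightarrow> ls_const R c \<in> ls_carrier R"
  using abelian_monoid.zero_closed[OF abelian_group.axioms(1)[OF lsbase_ag]]
  by (auto simp: ls_carrier_iff lsb_def ls_const_def intro!: exI[of _ 0])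

lemma ls_const_lsb: "lsb R (ls_const R c) 0"
  by (simp add: lsb_def ls_const_def)

lemma ls_const_zero: "ls_const R (zero R) = (\<lambda>j. zero R)"
  by (simp add: ls_const_def)

lemma ls_neg_carrier: "lsbase R \<Longrightarrow> X \<in> ls_carrier R \<Longrightarrow> (\<lambda>j. a_inv R (X j)) \<in> ls_carrier R"
proof -
  assume R: "lsbase R" and X: "X \<in> ls_carrier R"
  interpret R: abelian_group R using lsbase_ag[OF R] .
  from X obtain a where "lsb R X a" "\<forall>i. X i \<in> carrier R" by (auto simp: ls_carrier_iff)
  then show ?thesis by (auto simp: ls_carrier_iff lsb_def)
qed

lemma ls_neg_lsb: "lsbase R \<Longrightarrow> lsb R X a \<Longrightarrow> lsb R (\<lambda>j. a_inv R (X j)) a"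
proof -
  assume R: "lsbase R" and X: "lsb R X a"
  interpret R: abelian_group R using lsbase_ag[OF R] .
  show ?thesis using X by (auto simp: lsb_def)
qed

lemma ls_finsum_carrier:
  assumes R: "lsbase R" and F: "\<forall>a\<in>A. F a \<in> ls_carrier R"
  shows "finsum (LS R d) F A \<in> ls_carrier R"
proof -
  interpret L: abelian_group "LS R d" by (rule LS_ag[OF lsbase_ag[OF R]])
  show ?thesis using L.finsum_closed[of F A] F by (auto simp: Pi_def)
qed

lemma ls_finsum_lsb:
  assumes R: "lsbase R" and A: "finite A" and F: "\<forall>a\<in>A. F a \<in> ls_carrier R \<and> lsb R (F a) m"
  shows "lsb R (finsum (LS R d) F A) m"
proof -
  interpret R: abelian_group R using lsbase_ag[OF R] .
  show ?thesis unfolding lsb_def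
  proof (intro allI impI)
    fix n assume n: "n < m"
    have "finsum (LS R d) F A n = finsum R (\<lambda>a. F a n) A"
      using LS_finsum_pt[OF lsbase_ag[OF R] A] F by auto
    also have "\<dots> = finsum R (\<lambda>a. zero R) A"
      using F n by (intro R.finsum_cong') (auto simp: lsb_def)
    also have "\<dots> = zero R" by simp
    finally show "finsum (LS R d) F A n = zero R" .
  qed
qed

lemma ls_mult_lsb':
  assumes "lsbase R" "lsb R f a" "lsb R g b" "a + b = c"
  shows "lsb R (ls_mult R d f g) c"
  using ls_mult_lsb[OF lsbase_ag[OF assms(1)] assms(2,3)] assms(4) by simp

lemma ls_der_t_carrier_lsb:
  assumes R: "lsbase R" and d: "isder R d" and c: "c \<in> carrier R"
  shows "ls_der_t R d c i \<in> ls_carrier R \<and> lsb R (ls_der_t R d c i) (i + 1)"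
proof -
  interpret R: abelian_group R using lsbase_ag[OF R] .
  note mc = ls_mult_closed[OF R d]
  note tc = ls_t_carrier[OF R]
  note cc = ls_const_carrier[OF R c]
  consider "0 < i" | "i < 0" | "i = 0" by linarith
  then show ?thesis
  proof cases
    case 1
    define Y where "Y = (\<lambda>j. a_inv R (ls_mult R d (ls_t R 1) (ls_mult R d (ls_const R c) (ls_t R 1)) j))"
    have Yc: "Y \<in> ls_carrier R" unfolding Y_def by (intro ls_neg_carrier[OF R] mc tc cc)
    have "lsb R (ls_mult R d (ls_const R c) (ls_t R 1)) 1" by (rule ls_mult_lsb'[OF R ls_const_lsb ls_t_lsb]) simp
    then have "lsb R (ls_mult R d (ls_t R 1) (ls_mult R d (ls_const R c) (ls_t R 1))) 2"
      by (rule ls_mult_lsb'[OF R ls_t_lsb]) simp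
    then have Yb: "lsb R Y 2" unfolding Y_def by (rule ls_neg_lsb[OF R])
    have T: "\<forall>a\<in>{0..i - 1}. ls_mult R d (ls_t R a) (ls_mult R d Y (ls_t R (i - 1 - a))) \<in> ls_carrier R
       \<and> lsb R (ls_mult R d (ls_t R a) (ls_mult R d Y (ls_t R (i - 1 - a)))) (i + 1)"
    proof
      fix a assume "a \<in> {0..i - 1}"
      show "ls_mult R d (ls_t R a) (ls_mult R d Y (ls_t R (i - 1 - a))) \<in> ls_carrier R
       \<and> lsb R (ls_mult R d (ls_t R a) (ls_mult R d Y (ls_t R (i - 1 - a)))) (i + 1)"
      proof
        show "ls_mult R d (ls_t R a) (ls_mult R d Y (ls_t R (i - 1 - a))) \<in> ls_carrier R"
          by (intro mc tc Yc)
        have "lsb R (ls_mult R d Y (ls_t R (i-1-a))) (i+1-a)" by (rule ls_mult_lsb'[OF R Yb ls_t_lsb]) simp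
        then show "lsb R (ls_mult R d (ls_t R a) (ls_mult R d Y (ls_t R (i - 1 - a)))) (i + 1)"
          by (rule ls_mult_lsb'[OF R ls_t_lsb]) simp
      qed
    qed
    have "ls_der_t R d c i = finsum (LS R d) (\<lambda>a. ls_mult R d (ls_t R a) (ls_mult R d Y (ls_t R (i - 1 - a)))) {0..i - 1}"
      using 1 by (simp add: ls_der_t_def Y_def)
    moreover have "finsum (LS R d) (\<lambda>a. ls_mult R d (ls_t R a) (ls_mult R d Y (ls_t R (i - 1 - a)))) {0..i - 1} \<in> ls_carrier R" by (rule ls_finsum_carrier[OF R]) (use T in blast)
    moreover have "lsb R (finsum (LS R d) (\<lambda>a. ls_mult R d (ls_t R a) (ls_mult R d Y (ls_t R (i - 1 - a)))) {0..i - 1}) (i + 1)" by (rule ls_finsum_lsb[OF R]) (use T in auto)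
    ultimately show ?thesis by simp
  next
    case 2
    have T: "\<forall>a\<in>{0..- i - 1}. ls_mult R d (ls_t R (- a)) (ls_mult R d (ls_const R c) (ls_t R (- (- i - 1 - a)))) \<in> ls_carrier R
       \<and> lsb R (ls_mult R d (ls_t R (- a)) (ls_mult R d (ls_const R c) (ls_t R (- (- i - 1 - a))))) (i + 1)"
    proof
      fix a assume "a \<in> {0..- i - 1}"
      show "ls_mult R d (ls_t R (- a)) (ls_mult R d (ls_const R c) (ls_t R (- (- i - 1 - a)))) \<in> ls_carrier R
       \<and> lsb R (ls_mult R d (ls_t R (- a)) (ls_mult R d (ls_const R c) (ls_t R (- (- i - 1 - a))))) (i + 1)"
      proof
        show "ls_mult R d (ls_t R (- a)) (ls_mult R d (ls_const R c) (ls_t R (- (- i - 1 - a)))) \<in> ls_carrier R"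
          by (intro mc tc cc)
        have "lsb R (ls_mult R d (ls_const R c) (ls_t R (- (- i - 1 - a)))) (i+1+a)" by (rule ls_mult_lsb'[OF R ls_const_lsb ls_t_lsb]) simp
        then show "lsb R (ls_mult R d (ls_t R (- a)) (ls_mult R d (ls_const R c) (ls_t R (- (- i - 1 - a))))) (i + 1)"
          by (rule ls_mult_lsb'[OF R ls_t_lsb]) simp
      qed
    qed
    have "ls_der_t R d c i = finsum (LS R d) (\<lambda>a. ls_mult R d (ls_t R (- a)) (ls_mult R d (ls_const R c) (ls_t R (- (- i - 1 - a))))) {0..- i - 1}"
      using 2 by (simp add: ls_der_t_def)
    moreover have "finsum (LS R d) (\<lambda>a. ls_mult R d (ls_t R (- a)) (ls_mult R d (ls_const R c) (ls_t R (- (- i - 1 - a))))) {0..- i - 1} \<in> ls_carrier R" by (rule ls_finsum_carrier[OF R]) (use T in blast)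
    moreover have "lsb R (finsum (LS R d) (\<lambda>a. ls_mult R d (ls_t R (- a)) (ls_mult R d (ls_const R c) (ls_t R (- (- i - 1 - a))))) {0..- i - 1}) (i + 1)" by (rule ls_finsum_lsb[OF R]) (use T in auto)
    ultimately show ?thesis by simp
  next
    case 3
    then show ?thesis by (simp add: ls_der_t_def ls_carrier_iff lsb_def)
  qed
qed

lemma ls_der_parts:
  assumes R: "lsbase R" and d: "isder R d" and c: "c \<in> carrier R" and f: "\<forall>i. f i \<in> carrier R"
  defines "X \<equiv> \<lambda>i. ls_mult R d (ls_der_t R d c i) (ls_const R (f i))"
  shows "X i \<in> ls_carrier R" "lsb R (X i) (i + 1)" "f i = zero R \<Longrightarrow> X i = (\<lambda>j. zero R)"
proof -
  show "X i \<in> ls_carrier R" unfolding X_def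
    using ls_der_t_carrier_lsb[OF R d c] by (intro ls_mult_closed[OF R d] ls_const_carrier[OF R f[rule_format]]) auto
  show "lsb R (X i) (i + 1)" unfolding X_def
    by (rule ls_mult_lsb'[OF R _ ls_const_lsb]) (use ls_der_t_carrier_lsb[OF R d c] in auto)
  show "f i = zero R \<Longrightarrow> X i = (\<lambda>j. zero R)"
    unfolding X_def by (simp add: ls_const_zero ls_mult_zero_r lsbase_ag[OF R])
qed

lemma ls_der_set_sub:
  assumes R: "lsbase R" and d: "isder R d" and c: "c \<in> carrier R" and f: "\<forall>i. f i \<in> carrier R" and fa: "lsb R f a"
  shows "{i. ls_mult R d (ls_der_t R d c i) (ls_const R (f i)) n \<noteq> zero R} \<subseteq> {a..n - 1}"
proof
  fix i assume "i \<in> {i. ls_mult R d (ls_der_t R d c i) (ls_const R (f i)) n \<noteq> zero R}"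
  then have ne: "ls_mult R d (ls_der_t R d c i) (ls_const R (f i)) n \<noteq> zero R" by simp
  have "f i \<noteq> zero R" using ne ls_der_parts(3)[OF R d c f, of i] by auto
  then have "a \<le> i" using fa by (meson lsb_def not_less)
  moreover have "i + 1 \<le> n" using ne ls_der_parts(2)[OF R d c f, of i] by (meson lsb_def not_less)
  ultimately show "i \<in> {a..n - 1}" by simp
qed

lemma ls_der_carrier_lsb:
  assumes R: "lsbase R" and d: "isder R d" and D: "isder R D" and c: "c \<in> carrier R"
    and f: "\<forall>i. f i \<in> carrier R" and fa: "lsb R f a"
  shows "(\<forall>n. ls_der R d D c f n \<in> carrier R) \<and> lsb R (ls_der R d D c f) a"
proof -
  interpret R: abelian_group R using lsbase_ag[OF R] .
  have fin: "finite {i. ls_mult R d (ls_der_t R d c i) (ls_const R (f i)) n \<noteq> zero R}" for n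
    by (rule finite_subset[OF ls_der_set_sub[OF R d c f fa]]) simp
  have cl: "ls_sum R (\<lambda>i. ls_mult R d (ls_der_t R d c i) (ls_const R (f i))) n \<in> carrier R" for n
    unfolding ls_sum_def using ls_der_parts(1)[OF R d c f]
    by (intro R.finsum_closed) (auto simp: Pi_def ls_carrier_iff)
  show ?thesis
  proof
    show "\<forall>n. ls_der R d D c f n \<in> carrier R"
      unfolding ls_der_def using cl isder_closed[OF D] f by simp
    show "lsb R (ls_der R d D c f) a"
      unfolding lsb_def
    proof (intro allI impI)
      fix n assume n: "n < a"
      have "{i. ls_mult R d (ls_der_t R d c i) (ls_const R (f i)) n \<noteq> zero R} = {}"
        using ls_der_set_sub[OF R d c f fa, of n] n by auto
      then have "ls_sum R (\<lambda>i. ls_mult R d (ls_der_t R d c i) (ls_const R (f i))) n = zero R"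
        unfolding ls_sum_def by simp
      moreover have "f n = zero R" using fa n by (simp add: lsb_def)
      ultimately show "ls_der R d D c f n = zero R"
        unfolding ls_der_def by (simp add: isder_zero[OF D])
    qed
  qed
qed

lemma ls_der_isder:
  assumes R: "lsbase R" and d: "isder R d" and D: "isder R D" and c: "c \<in> carrier R"
  shows "isder (LS R d) (ls_der R d D c)"
  unfolding isder_def
proof (intro conjI ballI)
  fix f assume "f \<in> carrier (LS R d)"
  then obtain a where "\<forall>i. f i \<in> carrier R" "lsb R f a" by (auto simp: ls_carrier_iff)
  then show "ls_der R d D c f \<in> carrier (LS R d)"
    using ls_der_carrier_lsb[OF R d D c] by (auto simp: ls_carrier_iff)
next
  interpret R: abelian_group R using lsbase_ag[OF R] .
  have z: "\<forall>i. zero R \<in> carrier R" "\<And>a. lsb R (\<lambda>i. zero R) a" by (simp_all add: lsb_def)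
  show "ls_der R d D c (zero (LS R d)) = zero (LS R d)"
  proof (rule ext)
    fix n
    have "lsb R (ls_der R d D c (\<lambda>i. zero R)) (n + 1)"
      using ls_der_carrier_lsb[OF R d D c z(1) z(2)] by blast
    then show "ls_der R d D c (zero (LS R d)) n = zero (LS R d) n" by (simp add: lsb_def)
  qed
qed




lemma addhom_grp:
  assumes R: "abelian_group R" and S: "abelian_group S" and h: "h \<in> ring_hom R S"
  shows "group_hom (add_monoid R) (add_monoid S) h"
proof -
  have "h \<in> hom (add_monoid R) (add_monoid S)"
    using h unfolding hom_def ring_hom_def by auto
  then show ?thesis
    using abelian_group.a_group[OF R] abelian_group.a_group[OF S]
    by (simp add: group_hom_def group_hom_axioms_def)
qed

lemma addhom_zero:
  assumes R: "abelian_group R" and S: "abelian_group S" and h: "h \<in> ring_hom R S"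
  shows "h (zero R) = zero S"
  using group_hom.hom_one[OF addhom_grp[OF assms]] by simp

lemma addhom_neg:
  assumes R: "abelian_group R" and S: "abelian_group S" and h: "h \<in> ring_hom R S" and x: "x \<in> carrier R"
  shows "h (a_inv R x) = a_inv S (h x)"
  using group_hom.hom_inv[OF addhom_grp[OF R S h]] x by (simp add: a_inv_def)

lemma addhom_pow:
  assumes R: "abelian_group R" and S: "abelian_group S" and h: "h \<in> ring_hom R S" and x: "x \<in> carrier R"
  shows "h (add_pow R (m::int) x) = add_pow S m (h x)"
  using group_hom.hom_int_pow[OF addhom_grp[OF R S h]] x by (simp add: add_pow_def)

lemma addhom_finsum:
  assumes R: "abelian_group R" and S: "abelian_group S" and h: "h \<in> ring_hom R S"
    and A: "finite A" and F: "\<forall>a\<in>A. F a \<in> carrier R"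
  shows "h (finsum R F A) = finsum S (\<lambda>a. h (F a)) A"
  using A F
proof (induction A rule: finite_induct)
  case empty
  interpret R: abelian_group R by fact
  interpret S: abelian_group S by fact
  show ?case using addhom_zero[OF R S h] by simp
next
  case (insert x A)
  interpret R: abelian_group R by fact
  interpret S: abelian_group S by fact
  have "h (finsum R F (insert x A)) = h (F x \<oplus>\<^bsub>R\<^esub> finsum R F A)"
    using insert by (subst R.finsum_insert) (auto simp: Pi_def)
  also have "\<dots> = h (F x) \<oplus>\<^bsub>S\<^esub> h (finsum R F A)"
    using insert h by (intro ring_hom_add) (auto simp: Pi_def intro: R.finsum_closed)
  also have "\<dots> = h (F x) \<oplus>\<^bsub>S\<^esub> finsum S (\<lambda>a. h (F a)) A" using insert by simp
  also have "\<dots> = finsum S (\<lambda>a. h (F a)) (insert x A)"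
    using insert h by (subst S.finsum_insert) (auto simp: Pi_def ring_hom_closed)
  finally show ?case .
qed

lemma hom_dpow:
  assumes dR: "isder R dR" and h: "h \<in> ring_hom R S" and hd: "\<forall>x\<in>carrier R. h (dR x) = dS (h x)"
    and x: "x \<in> carrier R"
  shows "h ((dR ^^ k) x) = (dS ^^ k) (h x)"
  by (induction k) (simp_all add: hd dpow_closed[OF dR x])

lemma ls_map_carrier:
  assumes R: "abelian_group R" and S: "abelian_group S" and h: "h \<in> ring_hom R S" and f: "f \<in> ls_carrier R"
  shows "ls_map h f \<in> ls_carrier S"
proof -
  from f obtain a where "\<forall>i. f i \<in> carrier R" "lsb R f a" by (auto simp: ls_carrier_iff)
  then show ?thesis using addhom_zero[OF R S h] h
    by (auto simp: ls_carrier_iff lsb_def ls_map_def ring_hom_closed intro!: exI[of _ a])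
qed

lemma ls_map_hom:
  assumes R: "lsbase R" and S: "lsbase S" and dR: "isder R dR" and dS: "isder S dS"
    and h: "h \<in> ring_hom R S" and hd: "\<forall>x\<in>carrier R. h (dR x) = dS (h x)"
  shows "ls_map h \<in> ring_hom (LS R dR) (LS S dS)"
proof (rule ring_hom_memI)
  note Ra = lsbase_ag[OF R] and Sa = lsbase_ag[OF S]
  interpret R: abelian_group R by (rule Ra)
  interpret S: abelian_group S by (rule Sa)
  have h0: "h (zero R) = zero S" by (rule addhom_zero[OF Ra Sa h])
  show "ls_map h x \<in> carrier (LS S dS)" if "x \<in> carrier (LS R dR)" for x
    using ls_map_carrier[OF Ra Sa h] that by simp
  show "ls_map h (x \<oplus>\<^bsub>LS R dR\<^esub> y) = ls_map h x \<oplus>\<^bsub>LS S dS\<^esub> ls_map h y"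
    if "x \<in> carrier (LS R dR)" "y \<in> carrier (LS R dR)" for x y
    using that h by (auto simp: ls_map_def ls_carrier_iff ring_hom_add)
  show "ls_map h \<one>\<^bsub>LS R dR\<^esub> = \<one>\<^bsub>LS S dS\<^esub>"
    using h h0 by (auto simp: ls_map_def ls_one_def ring_hom_one)
  show "ls_map h (x \<otimes>\<^bsub>LS R dR\<^esub> y) = ls_map h x \<otimes>\<^bsub>LS S dS\<^esub> ls_map h y"
    if x: "x \<in> carrier (LS R dR)" and y: "y \<in> carrier (LS R dR)" for x y
  proof (rule ext)
    fix n
    from x y obtain a b where xa: "lsb R x a" and yb: "lsb R y b" and xc: "\<forall>i. x i \<in> carrier R" and yc: "\<forall>i. y i \<in> carrier R"
      by (auto simp: ls_carrier_iff)
    define T where "T = (\<lambda>(j :: int, k :: nat). add_pow R (int_binom (- j) k) ((dR ^^ k) (x (n - j - int k)) \<otimes>\<^bsub>R\<^esub> y j))"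
    define T' where "T' = (\<lambda>(j :: int, k :: nat). add_pow S (int_binom (- j) k) ((dS ^^ k) (h (x (n - j - int k))) \<otimes>\<^bsub>S\<^esub> h (y j)))"
    define B where "B = {(j :: int, k :: nat). x (n - j - int k) \<noteq> zero R \<and> y j \<noteq> zero R}"
    define A where "A = {(j :: int, k :: nat). h (x (n - j - int k)) \<noteq> zero S \<and> h (y j) \<noteq> zero S}"
    have finB: "finite B" unfolding B_def by (rule ls_mult_set_finite[OF xa yb])
    have AB: "A \<subseteq> B" unfolding A_def B_def using h0 by auto
    have Tc: "\<forall>p\<in>B. T p \<in> carrier R" unfolding T_def
      using xc yc by (auto intro!: R.add.int_pow_closed lsbase_mult[OF R] dpow_closed[OF dR])
    have hT: "h (T p) = T' p" for p
    proof -
      obtain j k where p: "p = (j, k)" by fastforce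
      have "h (T p) = add_pow S (int_binom (- j) k) (h ((dR ^^ k) (x (n - j - int k)) \<otimes>\<^bsub>R\<^esub> y j))"
        unfolding p T_def using xc yc
        by (simp add: addhom_pow[OF Ra Sa h] lsbase_mult[OF R] dpow_closed[OF dR])
      also have "\<dots> = T' p"
        unfolding p T'_def using xc yc h
        by (simp add: ring_hom_mult dpow_closed[OF dR] hom_dpow[OF dR h hd])
      finally show ?thesis .
    qed
    have "ls_map h (ls_mult R dR x y) n = h (finsum R T B)"
      by (simp add: ls_map_def ls_mult_def T_def B_def)
    also have "\<dots> = finsum S (\<lambda>p. h (T p)) B"
      by (rule addhom_finsum[OF Ra Sa h finB Tc])
    also have "\<dots> = finsum S T' B" by (simp add: hT)
    also have "\<dots> = finsum S T' A"
    proof (rule S.add.finprod_mono_neutral_cong_right[OF finB AB])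
      show "T' i = zero S" if "i \<in> B - A" for i
      proof -
        obtain j k where p: "i = (j, k)" by fastforce
        have "h (x (n - j - int k)) = zero S \<or> h (y j) = zero S" using that p by (auto simp: A_def)
        then show ?thesis unfolding p T'_def using xc yc h
          by (auto simp: dpow_zero[OF dS] lsbase_r0[OF S] lsbase_l0[OF S] ring_hom_closed dpow_closed[OF dS])
      qed
      show "T' \<in> B \<rightarrow> carrier S"
        using Tc by (auto simp: hT[symmetric] ring_hom_closed[OF h] Pi_def)
    qed simp
    also have "\<dots> = (ls_map h x \<otimes>\<^bsub>LS S dS\<^esub> ls_map h y) n"
      by (simp add: ls_map_def ls_mult_def T'_def A_def)
    finally show "ls_map h (x \<otimes>\<^bsub>LS R dR\<^esub> y) n = (ls_map h x \<otimes>\<^bsub>LS S dS\<^esub> ls_map h y) n" by simp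
  qed
qed




lemma ls_map_der_t:
  assumes R: "lsbase R" and S: "lsbase S" and dR: "isder R dR" and dS: "isder S dS"
    and h: "h \<in> ring_hom R S" and hd: "\<forall>x\<in>carrier R. h (dR x) = dS (h x)"
    and c: "c \<in> carrier R"
  shows "ls_map h (ls_der_t R dR c i) = ls_der_t S dS (h c) i"
proof -
  note Ra = lsbase_ag[OF R] and Sa = lsbase_ag[OF S]
  interpret R: abelian_group R by (rule Ra)
  interpret S: abelian_group S by (rule Sa)
  have h0: "h (zero R) = zero S" by (rule addhom_zero[OF Ra Sa h])
  have H: "ls_map h \<in> ring_hom (LS R dR) (LS S dS)" by (rule ls_map_hom[OF R S dR dS h hd])
  have Hm: "ls_map h (ls_mult R dR x y) = ls_mult S dS (ls_map h x) (ls_map h y)"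
    if "x \<in> ls_carrier R" "y \<in> ls_carrier R" for x y
    using ring_hom_mult[OF H, of x y] that by simp
  have Ht: "ls_map h (ls_t R a) = ls_t S a" for a
    using h0 h by (auto simp: ls_map_def ls_t_def ring_hom_one)
  have Hc: "ls_map h (ls_const R c) = ls_const S (h c)"
    using h0 by (auto simp: ls_map_def ls_const_def)
  have Hn: "ls_map h (\<lambda>j. a_inv R (X j)) = (\<lambda>j. a_inv S (ls_map h X j))" if "X \<in> ls_carrier R" for X
    using that addhom_neg[OF Ra Sa h] by (auto simp: ls_map_def ls_carrier_iff)
  have Hf: "ls_map h (finsum (LS R dR) F A) = finsum (LS S dS) (\<lambda>a. ls_map h (F a)) A"
    if "finite A" "\<forall>a\<in>A. F a \<in> ls_carrier R" for F A
    using addhom_finsum[OF LS_ag[OF Ra] LS_ag[OF Sa] H that(1)] that(2) by simp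
  note cl = ls_mult_closed[OF R dR] ls_t_carrier[OF R] ls_const_carrier[OF R c] ls_neg_carrier[OF R]
  consider "0 < i" | "i < 0" | "i = 0" by linarith
  then show ?thesis
  proof cases
    case 1
    then show ?thesis unfolding ls_der_t_def
      by (simp add: Hf Hm Ht Hc Hn cl)
  next
    case 2
    then show ?thesis unfolding ls_der_t_def
      by (simp add: Hf Hm Ht Hc Hn cl)
  next
    case 3
    then show ?thesis unfolding ls_der_t_def using h0 by (simp add: ls_map_def)
  qed
qed

lemma ls_map_der:
  assumes R: "lsbase R" and S: "lsbase S" and dR: "isder R dR" and dS: "isder S dS"
    and DR: "isder R DR" and DS: "isder S DS"
    and h: "h \<in> ring_hom R S" and hd: "\<forall>x\<in>carrier R. h (dR x) = dS (h x)"
    and hD: "\<forall>x\<in>carrier R. h (DR x) = DS (h x)"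
    and c: "c \<in> carrier R" and f: "f \<in> ls_carrier R"
  shows "ls_map h (ls_der R dR DR c f) = ls_der S dS DS (h c) (ls_map h f)"
proof (rule ext)
  fix n
  note Ra = lsbase_ag[OF R] and Sa = lsbase_ag[OF S]
  interpret R: abelian_group R by (rule Ra)
  interpret S: abelian_group S by (rule Sa)
  have h0: "h (zero R) = zero S" by (rule addhom_zero[OF Ra Sa h])
  have H: "ls_map h \<in> ring_hom (LS R dR) (LS S dS)" by (rule ls_map_hom[OF R S dR dS h hd])
  from f obtain a where fc: "\<forall>i. f i \<in> carrier R" and fa: "lsb R f a" by (auto simp: ls_carrier_iff)
  define X where "X = (\<lambda>i. ls_mult R dR (ls_der_t R dR c i) (ls_const R (f i)))"
  define Y where "Y = (\<lambda>i. ls_mult S dS (ls_der_t S dS (h c) i) (ls_const S (ls_map h f i)))"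
  have Xc: "X i \<in> ls_carrier R" for i unfolding X_def by (rule ls_der_parts(1)[OF R dR c fc])
  have HX: "ls_map h (X i) = Y i" for i
  proof -
    have "ls_map h (X i) = ls_mult S dS (ls_map h (ls_der_t R dR c i)) (ls_map h (ls_const R (f i)))"
      unfolding X_def using ring_hom_mult[OF H, of "ls_der_t R dR c i" "ls_const R (f i)"]
        ls_der_t_carrier_lsb[OF R dR c] ls_const_carrier[OF R fc[rule_format]] by simp
    also have "ls_map h (ls_const R (f i)) = ls_const S (ls_map h f i)"
      using h0 by (auto simp: ls_map_def ls_const_def)
    also have "ls_mult S dS (ls_map h (ls_der_t R dR c i)) (ls_const S (ls_map h f i)) = Y i" unfolding Y_def
      by (simp add: ls_map_der_t[OF R S dR dS h hd c])
    finally show ?thesis .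
  qed
  define B where "B = {i. X i n \<noteq> zero R}"
  define A where "A = {i. Y i n \<noteq> zero S}"
  have finB: "finite B" unfolding B_def X_def
    by (rule finite_subset[OF ls_der_set_sub[OF R dR c fc fa]]) simp
  have hXn: "h (X i n) = Y i n" for i using HX[of i] by (metis ls_map_def)
  have AB: "A \<subseteq> B"
  proof
    fix i assume "i \<in> A"
    then have "h (X i n) \<noteq> zero S" by (simp add: A_def hXn)
    then show "i \<in> B" using h0 by (auto simp: B_def)
  qed
  have "ls_map h (ls_der R dR DR c f) n = h (add R (finsum R (\<lambda>i. X i n) B) (DR (f n)))"
    by (simp add: ls_map_def ls_der_def ls_sum_def X_def B_def)
  also have "\<dots> = add S (h (finsum R (\<lambda>i. X i n) B)) (DS (h (f n)))"
    using Xc fc finB hD by (simp add: ring_hom_add[OF h] R.finsum_closed Pi_def ls_carrier_iff isder_closed[OF DR])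
  also have "h (finsum R (\<lambda>i. X i n) B) = finsum S (\<lambda>i. Y i n) B"
    using addhom_finsum[OF Ra Sa h finB, of "\<lambda>i. X i n"] Xc by (simp add: ls_carrier_iff hXn)
  also have "\<dots> = finsum S (\<lambda>i. Y i n) A"
  proof (rule S.add.finprod_mono_neutral_cong_right[OF finB AB])
    show "(\<lambda>i. Y i n) \<in> B \<rightarrow> carrier S"
      using Xc h by (auto simp: hXn[symmetric] ls_carrier_iff ring_hom_closed)
  qed (auto simp: A_def)
  also have "add S (finsum S (\<lambda>i. Y i n) A) (DS (h (f n))) = ls_der S dS DS (h c) (ls_map h f) n"
    by (simp add: ls_der_def ls_sum_def Y_def A_def ls_map_def)
  finally show "ls_map h (ls_der R dR DR c f) n = ls_der S dS DS (h c) (ls_map h f) n" .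
qed

lemma ls_der_zero:
  assumes S: "lsbase S" and dS: "isder S dS"
  shows "ls_der S dS (\<lambda>x. zero S) (zero S) g = (\<lambda>i. zero S)"
proof -
  note Sa = lsbase_ag[OF S]
  interpret S: abelian_group S by (rule Sa)
  interpret L: abelian_group "LS S dS" by (rule LS_ag[OF Sa])
  have z: "ls_der_t S dS (zero S) i = (\<lambda>j. zero S)" for i
  proof -
    have ai: "a_inv S (zero S) = zero S" using S.add.inv_one by (simp add: a_inv_def)
    have "finsum (LS S dS) (\<lambda>a. \<zero>\<^bsub>LS S dS\<^esub>) A = \<zero>\<^bsub>LS S dS\<^esub>" for A :: "int set"
      by (rule L.finsum_zero)
    then show ?thesis unfolding ls_der_t_def
      by (simp add: ai ls_const_zero ls_mult_zero_l ls_mult_zero_r Sa)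
  qed
  show ?thesis unfolding ls_der_def ls_sum_def
    by (simp add: z ls_mult_zero_l Sa)
qed




lemma ring_lsbase: "ring R \<Longrightarrow> lsbase R"
proof -
  assume "ring R"
  then interpret R: ring R .
  show ?thesis by (rule lsbaseI) (simp_all add: R.is_abelian_group)
qed

lemma isder_zerofun: "lsbase S \<Longrightarrow> isder S (\<lambda>x. zero S)"
  by (simp add: isder_def abelian_monoid.zero_closed[OF abelian_group.axioms(1)[OF lsbase_ag]])

lemma ls_map_sc:
  assumes "\<forall>x\<in>carrier R. h (scR c x) = scS c (h x)" and "f \<in> ls_carrier R"
  shows "ls_map h (ls_sc scR c f) = ls_sc scS c (ls_map h f)"
  using assms by (auto simp: ls_map_def ls_sc_def ls_carrier_iff)

lemma ul_der_zero: "ul_der sm br s (zero (UL_ring sm br)) = zero (UL_ring sm br)"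
proof -
  interpret U: ring "UL_ring sm br" by (rule UL_ring)
  show ?thesis unfolding ul_der_def by (simp add: gen_in)
qed

lemma ker_ideal:
  assumes hom: "lie_hom sm br heis_sm heis_br \<rho>" and n: "\<rho> n = 0"
  shows "\<rho> (br n s) = 0"
  using hom n by (simp add: lie_hom_def heis_br_def zero_prod_def)

theorem mainTheorem8:
  fixes sm :: "'k::field \<Rightarrow> 'l::ab_group_add \<Rightarrow> 'l"
    and br :: "'l \<Rightarrow> 'l \<Rightarrow> 'l"
    and \<rho> :: "'l \<Rightarrow> 'k \<times> 'k \<times> 'k"
    and u v :: 'l
    and \<epsilon> :: "('l list \<Rightarrow> 'k) set \<Rightarrow> 'k"
  assumes L: "lie_algebra sm br"
    and gen: "lie_gen sm br {u, v} = UNIV"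
    and hom: "lie_hom sm br heis_sm heis_br \<rho>"
    and \<rho>u: "\<rho> u = hx" and \<rho>v: "\<rho> v = hy"
  defines "N \<equiv> {a. \<rho> a = 0}"
    and "w \<equiv> br v u"
  assumes aug: "k_alg_hom (UN_ring sm br N) K_ring (ul_sc sm br) (*) \<epsilon>"
    and aug0: "\<forall>n\<in>N. \<epsilon> (ul_gen sm br n) = 0"
  defines "UNr \<equiv> UN_ring sm br N"
  defines "\<delta>w \<equiv> ul_der sm br w"
  defines "\<delta>v \<equiv> ul_der sm br v"
  defines "\<delta>u \<equiv> ul_der sm br u"
  defines "R1 \<equiv> LS UNr \<delta>w"
  defines "\<delta>v1 \<equiv> ls_der UNr \<delta>w \<delta>v (\<delta>v (ul_gen sm br w))"
  defines "\<delta>u1 \<equiv> ls_der UNr \<delta>w \<delta>u (\<delta>u (ul_gen sm br w))"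
  defines "R2 \<equiv> LS R1 \<delta>v1"
  defines "\<delta>u2 \<equiv> ls_der R1 \<delta>v1 \<delta>u1 (ls_t UNr (-1))"
  defines "R3 \<equiv> LS R2 \<delta>u2"
  defines "T1 \<equiv> LS (K_ring :: 'k ring) (\<lambda>a. 0)"
  defines "T2 \<equiv> LS T1 (\<lambda>f. zero T1)"
  defines "\<delta>x \<equiv> ls_der T1 (\<lambda>f. zero T1) (\<lambda>f. zero T1) (ls_t (K_ring :: 'k ring) (-1))"
  defines "T3 \<equiv> LS T2 \<delta>x"
  defines "\<Phi>w \<equiv> ls_map \<epsilon>"
  defines "\<Phi>v \<equiv> ls_map \<Phi>w"
  defines "\<Phi>u \<equiv> ls_map \<Phi>v"
  shows "k_alg_hom R1 T1 (ls_sc (ul_sc sm br)) (ls_sc (*)) \<Phi>w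
       \<and> k_alg_hom R2 T2 (ls_sc (ls_sc (ul_sc sm br))) (ls_sc (ls_sc (*))) \<Phi>v
       \<and> k_alg_hom R3 T3 (ls_sc (ls_sc (ls_sc (ul_sc sm br)))) (ls_sc (ls_sc (ls_sc (*)))) \<Phi>u"
proof -
  have Ndef: "N = {a. \<rho> a = 0}" using assms(6) by simp
  have wdef: "w = br v u" using assms(7) by simp
  have Ns: "\<And>n s. n \<in> N \<Longrightarrow> br n s \<in> N" using ker_ideal[OF hom] by (simp add: Ndef)
  have \<rho>w: "\<rho> w = (0, 0, 1)" using hom \<rho>u \<rho>v by (simp add: wdef lie_hom_def heis_br_def hx_def hy_def)
  have wvN: "br w v \<in> N" using hom \<rho>w \<rho>v by (simp add: Ndef lie_hom_def heis_br_def hy_def zero_prod_def)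
  have wuN: "br w u \<in> N" using hom \<rho>w \<rho>u by (simp add: Ndef lie_hom_def heis_br_def hx_def zero_prod_def)
  have ringU: "ring UNr" unfolding assms(10) by (rule UN_ring_ring)
  have U: "lsbase UNr" by (rule ring_lsbase[OF ringU])
  have K: "lsbase (K_ring :: 'k ring)" by (rule ring_lsbase[OF K_ring])
  have carU: "carrier UNr = un_set sm br N" unfolding assms(10) by simp
  have eh: "\<epsilon> \<in> ring_hom UNr K_ring" using aug unfolding assms(10) k_alg_hom_def by simp
  have zU: "zero UNr = zero (UL_ring sm br)" unfolding assms(10) by simp
  have isdU: "isder UNr (ul_der sm br s)" for s
    unfolding isder_def carU zU using der_un[where N=N and s=s and br=br and sm=sm, OF Ns] by (auto simp: ul_der_zero)
  have epsd: "\<forall>x\<in>carrier UNr. \<epsilon> (ul_der sm br s x) = (\<lambda>a. 0) (\<epsilon> x)" for s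
    unfolding carU using der_eps[where N=N and s=s and br=br and sm=sm and \<epsilon>=\<epsilon>, OF Ns _ eh[unfolded assms(10)] aug0] by auto
  have dK: "isder (K_ring :: 'k ring) (\<lambda>a. 0)" by (simp add: isder_def)
  have dK': "isder (K_ring :: 'k ring) (\<lambda>a. zero K_ring)" by (simp add: isder_def)
  have R1: "lsbase R1" unfolding assms(14) assms(11) by (rule LS_lsbase[OF U isdU])
  have T1: "lsbase T1" unfolding assms(20) by (rule LS_lsbase[OF K dK])
  have hw: "\<Phi>w \<in> ring_hom R1 T1"
    unfolding assms(24) assms(14) assms(20) assms(11) by (rule ls_map_hom[OF U K isdU dK eh epsd])
  have cv: "\<delta>v (ul_gen sm br w) \<in> carrier UNr" "\<epsilon> (\<delta>v (ul_gen sm br w)) = 0"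
    unfolding assms(12) der_gen carU using wvN aug0 by (auto intro: un_set.gen)
  have cu: "\<delta>u (ul_gen sm br w) \<in> carrier UNr" "\<epsilon> (\<delta>u (ul_gen sm br w)) = 0"
    unfolding assms(13) der_gen carU using wuN aug0 by (auto intro: un_set.gen)
  have dv1: "isder R1 \<delta>v1" unfolding assms(15) assms(14)
    using ls_der_isder[OF U isdU isdU cv(1)] by (simp add: assms(11) assms(12))
  have du1: "isder R1 \<delta>u1" unfolding assms(16) assms(14)
    using ls_der_isder[OF U isdU isdU cu(1)] by (simp add: assms(11) assms(13))
  have dT1: "isder T1 (\<lambda>f. zero T1)" by (rule isder_zerofun[OF T1])
  have zT1: "zero T1 = (\<lambda>i. 0)" unfolding assms(20) by simp
  have com1: "\<Phi>w (ls_der UNr \<delta>w D c f) = zero T1"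
    if D: "D = ul_der sm br s" and c: "c \<in> carrier UNr" "\<epsilon> c = 0" and f: "f \<in> carrier R1" for D c f s
  proof -
    have "\<Phi>w (ls_der UNr \<delta>w D c f) = ls_der K_ring (\<lambda>a. 0) (\<lambda>a. zero K_ring) (\<epsilon> c) (ls_map \<epsilon> f)"
      unfolding assms(24) D assms(11)
      by (rule ls_map_der[OF U K isdU dK isdU dK' eh epsd _ c(1)]) (use epsd f in \<open>auto simp: assms(14) assms(11)\<close>)
    also have "\<dots> = (\<lambda>i. zero K_ring)" using ls_der_zero[OF K dK] c(2) by simp
    finally show ?thesis by (simp add: zT1)
  qed
  have com_v1: "\<forall>f\<in>carrier R1. \<Phi>w (\<delta>v1 f) = (\<lambda>f. zero T1) (\<Phi>w f)"
    using com1[OF meta_eq_to_obj_eq[OF assms(12)] cv] unfolding assms(15) by simp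
  have com_u1: "\<forall>f\<in>carrier R1. \<Phi>w (\<delta>u1 f) = (\<lambda>f. zero T1) (\<Phi>w f)"
    using com1[OF meta_eq_to_obj_eq[OF assms(13)] cu] unfolding assms(16) by simp
  have R2: "lsbase R2" unfolding assms(17) by (rule LS_lsbase[OF R1 dv1])
  have T2: "lsbase T2" unfolding assms(21) by (rule LS_lsbase[OF T1 dT1])
  have hv: "\<Phi>v \<in> ring_hom R2 T2"
    unfolding assms(25) assms(17) assms(21) by (rule ls_map_hom[OF R1 T1 dv1 dT1 hw com_v1])
  have tU: "ls_t UNr (-1) \<in> carrier R1" unfolding assms(14) using ls_t_carrier[OF U] by simp
  have tK: "ls_t (K_ring :: 'k ring) (-1) \<in> carrier T1" unfolding assms(20) using ls_t_carrier[OF K] by simp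
  have htU: "\<Phi>w (ls_t UNr (-1)) = ls_t K_ring (-1)"
    using ring_hom_one[OF eh] ring_hom_zero[OF eh ringU K_ring]
    unfolding assms(24) by (auto simp: ls_map_def ls_t_def)
  have du2: "isder R2 \<delta>u2" unfolding assms(18) assms(17) by (rule ls_der_isder[OF R1 dv1 du1 tU])
  have dx: "isder T2 \<delta>x" unfolding assms(22) assms(21) by (rule ls_der_isder[OF T1 dT1 dT1 tK])
  have com2: "\<forall>F\<in>carrier R2. \<Phi>v (\<delta>u2 F) = \<delta>x (\<Phi>v F)"
  proof
    fix F assume F: "F \<in> carrier R2"
    show "\<Phi>v (\<delta>u2 F) = \<delta>x (\<Phi>v F)"
      unfolding assms(25) assms(18) assms(22) htU[symmetric]
      by (rule ls_map_der[OF R1 T1 dv1 dT1 du1 dT1 hw com_v1 com_u1 tU]) (use F in \<open>simp add: assms(17)\<close>)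
  qed
  have hu: "\<Phi>u \<in> ring_hom R3 T3"
    unfolding assms(26) assms(19) assms(23) by (rule ls_map_hom[OF R2 T2 du2 dx hv com2])
  have lin0: "\<forall>x\<in>carrier UNr. \<epsilon> (ul_sc sm br c x) = c * \<epsilon> x" for c
    using aug unfolding assms(10) k_alg_hom_def by simp
  have lin1: "\<forall>x\<in>carrier R1. \<Phi>w (ls_sc (ul_sc sm br) c x) = ls_sc (*) c (\<Phi>w x)" for c
    unfolding assms(24) using ls_map_sc[where R=UNr and h=\<epsilon> and scR="ul_sc sm br" and scS="(*)" and c=c, OF lin0[of c]] by (simp add: assms(14))
  have lin2: "\<forall>x\<in>carrier R2. \<Phi>v (ls_sc (ls_sc (ul_sc sm br)) c x) = ls_sc (ls_sc (*)) c (\<Phi>v x)" for c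
    unfolding assms(25) using ls_map_sc[where R=R1 and h=\<Phi>w and scR="ls_sc (ul_sc sm br)" and scS="ls_sc (*)" and c=c, OF lin1[of c]] by (simp add: assms(17))
  have lin3: "\<forall>x\<in>carrier R3. \<Phi>u (ls_sc (ls_sc (ls_sc (ul_sc sm br))) c x) = ls_sc (ls_sc (ls_sc (*))) c (\<Phi>u x)" for c
    unfolding assms(26) using ls_map_sc[where R=R2 and h=\<Phi>v and scR="ls_sc (ls_sc (ul_sc sm br))" and scS="ls_sc (ls_sc (*))" and c=c, OF lin2[of c]] by (simp add: assms(19))
  show ?thesis unfolding k_alg_hom_def using hw hv hu lin1 lin2 lin3 by blast
qed


end
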